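(* Assume $\theta_i<1$ for all $i$ and $\theta_j>0$ for some $j$. Suppose $\mathcal G(C)$ is a star topology with center node $l$ and $0<\theta_l<1$. Then: (i) for every $i\in\mathcal V_p\setminus\{l\}$ with $C_{li}=0$ and every $x(0)\in\Delta_n$, the trajectory of system (A) satisfies that $x_i(s)$ converges exponentially to $\dfrac{n-\sqrt{n^2-4n\theta_i(1-\theta_i)}}{2n\theta_i}$; (ii) if moreover $C_{li}=0$ for all $i\in\mathcal V_p\setminus\{l\}$ and $\sum_{j\in\mathcal V_p\setminus\{l\}}\theta_j\le \dfrac{4n}{5}-1$, then for every $x(0)\in\Delta_n$ the trajectory of system (A) converges exponentially to the unique equilibrium $x^*$ given by $x^*_i=\dfrac{n-\sqrt{n^2-4n\theta_i(1-\theta_i)}}{2n\theta_i}$ for $i\in\mathcal V_p\setminus\{l\}$, $x^*_l=\dfrac{n-\sqrt{n^2-4n\theta_l(1-\theta_l)\xi^*}}{2n\theta_l}$, and $x^*_i=\dfrac1n+\big(\dfrac{\xi^*}{n}-x^*_l\big)C_{li}$ for $i\in\mathcal V_f$, where $\xi^*=n-r-n\sum_{j\in\mathcal V_p\setminus\{l\}}x^*_j$ and $r=|\mathcal V_f|$.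
   Context: Let $n\ge 2$, $\mathbf 1_n$ the all-ones vector, $I_n$ the identity matrix, $\Delta_n=\{x\in\mathbb R^n: x\ge 0,\ \mathbf 1_n^Tx=1\}$. Let $C\in\mathbb R^{n\times n}$ be a nonnegative row-stochastic matrix with zero diagonal, and $\mathcal G(C)$ the digraph on $\{1,\dots,n\}$ with an edge $(i,j)$ iff $C_{ij}>0$. $\mathcal G(C)$ is a star topology with center node $l$ if every edge of $\mathcal G(C)$ is either from $l$ or to $l$ (i.e. $C_{ij}>0$ implies $i=l$ or $j=l$). Let $\theta=(\theta_1,\dots,\theta_n)\in[0,1]^n$, $\Theta=\mathrm{diag}(\theta)$, $W(x)=\mathrm{diag}(x)+(I_n-\mathrm{diag}(x))C$. Let $\mathcal V_f=\{i:\theta_i=0\}$ and $\mathcal V_p=\{i:\theta_i>0\}$. System (A): $x(s+1)=F(x(s))$, $s=0,1,2,\dots$, $x(0)\in\Delta_n$, where $F(x)=(I_n-\Theta)(I_n-W(x)^T\Theta)^{-1}\mathbf 1_n/n$. *)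

theory Defs
  imports "HOL-Analysis.Analysis"
begin

text \<open>Vectors in R^n are modelled as real^'n with n = CARD('n);
  n x n matrices as real^'n^'n (rows indexed first).\<close>

definition diagm :: "real^'n \<Rightarrow> real^'n^'n" where
  "diagm x = (\<chi> i j. if i = j then x $ i else 0)"

definition ones :: "real^'n" where
  "ones = (\<chi> i. 1)"

definition prob_simplex :: "(real^'n) set" where
  "prob_simplex = {x. (\<forall>i. 0 \<le> x $ i) \<and> (\<Sum>i\<in>UNIV. x $ i) = 1}"

definition admissible_C :: "real^'n^'n \<Rightarrow> bool" where
  "admissible_C C \<longleftrightarrow> (\<forall>i j. 0 \<le> C $ i $ j) \<and> (\<forall>i. (\<Sum>j\<in>UNIV. C $ i $ j) = 1)
     \<and> (\<forall>i. C $ i $ i = 0)"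

text \<open>G(C) is a star topology with center l: every edge (i,j), i.e. C_ij > 0,
  is from l or to l.\<close>
definition star_topology :: "real^'n^'n \<Rightarrow> 'n \<Rightarrow> bool" where
  "star_topology C l \<longleftrightarrow> (\<forall>i j. 0 < C $ i $ j \<longrightarrow> i = l \<or> j = l)"

definition Wm :: "real^'n^'n \<Rightarrow> real^'n \<Rightarrow> real^'n^'n" where
  "Wm C x = diagm x + (mat 1 - diagm x) ** C"

definition Fmap :: "real^'n^'n \<Rightarrow> real^'n \<Rightarrow> real^'n \<Rightarrow> real^'n" where
  "Fmap C \<theta> x = (mat 1 - diagm \<theta>) *v
      (matrix_inv (mat 1 - transpose (Wm C x) ** diagm \<theta>) *v
        ((1 / real CARD('n)) *\<^sub>R ones))"

definition trajectory :: "real^'n^'n \<Rightarrow> real^'n \<Rightarrow> (nat \<Rightarrow> real^'n) \<Rightarrow> bool" where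
  "trajectory C \<theta> x \<longleftrightarrow> x 0 \<in> prob_simplex \<and> (\<forall>s. x (Suc s) = Fmap C \<theta> (x s))"

definition exp_conv :: "(nat \<Rightarrow> 'a::real_normed_vector) \<Rightarrow> 'a \<Rightarrow> bool" where
  "exp_conv f a \<longleftrightarrow> (\<exists>c q. 0 \<le> c \<and> 0 \<le> q \<and> q < 1 \<and> (\<forall>s. norm (f s - a) \<le> c * q ^ s))"

definition limval :: "real \<Rightarrow> real \<Rightarrow> real" where
  "limval n t = (n - sqrt (n^2 - 4 * n * t * (1 - t))) / (2 * n * t)"

definition xi_star :: "real^'n \<Rightarrow> 'n \<Rightarrow> real" where
  "xi_star \<theta> l = (let n = real CARD('n); r = real (card {i. \<theta> $ i = 0}) in
     n - r - n * (\<Sum>j\<in>{j. 0 < \<theta> $ j \<and> j \<noteq> l}. limval n (\<theta> $ j)))"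

definition xstar_l :: "real^'n \<Rightarrow> 'n \<Rightarrow> real" where
  "xstar_l \<theta> l = (let n = real CARD('n) in
     (n - sqrt (n^2 - 4 * n * (\<theta> $ l) * (1 - \<theta> $ l) * xi_star \<theta> l)) / (2 * n * (\<theta> $ l)))"

definition xstar :: "real^'n^'n \<Rightarrow> real^'n \<Rightarrow> 'n \<Rightarrow> real^'n" where
  "xstar C \<theta> l = (\<chi> i. let n = real CARD('n) in
     if i = l then xstar_l \<theta> l
     else if 0 < \<theta> $ i then limval n (\<theta> $ i)
     else 1 / n + (xi_star \<theta> l / n - xstar_l \<theta> l) * C $ l $ i)"

end

theory Submission
  imports Defs
begin



lemma W_comp: "(Wm C x) $ j $ i = (if j = i then x $ j else 0) + (1 - x $ j) * C $ j $ i"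
proof -
  have "(\<Sum>k\<in>UNIV. ((if j=k then 1 else 0) - (if j=k then x$j else 0)) * C$k$i)
       = (\<Sum>k\<in>UNIV. if j = k then (1 - x$j)*C$j$i else 0)" by (rule sum.cong) auto
  also have "\<dots> = (1 - x$j)*C$j$i" by (simp add: sum.delta)
  finally have e: "(\<Sum>k\<in>UNIV. ((if j=k then 1 else 0) - (if j=k then x$j else 0)) * C$k$i) = (1 - x$j)*C$j$i" .
  show ?thesis
    unfolding Wm_def diagm_def matrix_matrix_mult_def mat_def
    by (simp only: vec_lambda_beta vector_add_component vector_minus_component e)
qed

lemma M_mult: "((mat 1 - transpose (Wm C x) ** diagm \<theta>) *v v) $ i
   = v $ i - (\<Sum>j\<in>UNIV. Wm C x $ j $ i * \<theta> $ j * v $ j)"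
proof -
  have 2: "\<And>j. (\<Sum>k\<in>UNIV. Wm C x $ k $ i * (if k = j then \<theta> $ k else 0)) = Wm C x $ j $ i * \<theta> $ j"
  proof -
    fix j
    have "(\<Sum>k\<in>UNIV. Wm C x $ k $ i * (if k = j then \<theta> $ k else 0)) = (\<Sum>k\<in>UNIV. if k = j then Wm C x $ j $ i * \<theta> $ j else 0)" by (rule sum.cong) auto
    then show "(\<Sum>k\<in>UNIV. Wm C x $ k $ i * (if k = j then \<theta> $ k else 0)) = Wm C x $ j $ i * \<theta> $ j" by simp
  qed
  have 1: "(\<Sum>j\<in>UNIV. v $ j * (if i = j then 1 else 0)) = v $ i"
  proof -
    have "(\<Sum>j\<in>UNIV. v $ j * (if i = j then 1 else 0)) = (\<Sum>j\<in>UNIV. if i = j then v $ i else 0)" by (rule sum.cong) auto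
    then show ?thesis by simp
  qed
  show ?thesis
    by (simp add: matrix_vector_mult_def matrix_matrix_mult_def diagm_def mat_def transpose_def
     algebra_simps sum_subtractf 1 2)
qed



lemma W_nonneg:
  fixes C :: "real^'n^'n" and x \<theta> :: "real^'n"
  assumes adm: "admissible_C C" and x: "\<forall>i. 0 \<le> x$i \<and> x$i \<le> 1"
  shows "0 \<le> Wm C x $ j $ i"
  using adm x unfolding W_comp admissible_C_def by (simp add: add_nonneg_nonneg)

lemma W_rowsum:
  assumes adm: "admissible_C C"
  shows "(\<Sum>i\<in>UNIV. Wm C x $ j $ i) = 1"
proof -
  have "(\<Sum>i\<in>UNIV. Wm C x $ j $ i) = (\<Sum>i\<in>UNIV. (if j = i then x $ j else 0)) + (1 - x$j) * (\<Sum>i\<in>UNIV. C $ j $ i)"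
    by (simp add: W_comp sum.distrib sum_distrib_left)
  also have "\<dots> = 1" using adm unfolding admissible_C_def by simp
  finally show ?thesis .
qed

lemma key_zero:
  fixes C :: "real^'n^'n" and x \<theta> :: "real^'n"
  fixes u :: "'n \<Rightarrow> real"
  assumes adm: "admissible_C C" and x: "\<forall>i. 0 \<le> x$i \<and> x$i \<le> 1"
    and th: "\<forall>i. 0 \<le> \<theta>$i \<and> \<theta>$i < 1"
    and u0: "\<forall>i. 0 \<le> u i" and ub: "\<forall>i. u i \<le> (\<Sum>j\<in>UNIV. Wm C x $ j $ i * \<theta> $ j * u j)"
  shows "u i = 0"
proof -
  have "(\<Sum>i\<in>UNIV. u i) \<le> (\<Sum>i\<in>UNIV. \<Sum>j\<in>UNIV. Wm C x $ j $ i * \<theta> $ j * u j)"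
    using ub by (simp add: sum_mono)
  also have "\<dots> = (\<Sum>j\<in>UNIV. \<Sum>i\<in>UNIV. Wm C x $ j $ i * \<theta> $ j * u j)" by (rule sum.swap)
  also have "\<dots> = (\<Sum>j\<in>UNIV. \<theta> $ j * u j * (\<Sum>i\<in>UNIV. Wm C x $ j $ i))"
    by (simp add: sum_distrib_left mult_ac)
  also have "\<dots> = (\<Sum>j\<in>UNIV. \<theta> $ j * u j)" using W_rowsum[OF adm] by simp
  finally have "(\<Sum>j\<in>UNIV. (1 - \<theta> $ j) * u j) \<le> 0"
    by (simp add: algebra_simps sum_subtractf)
  moreover have "\<forall>j\<in>UNIV. 0 \<le> (1 - \<theta> $ j) * u j" using th u0 by (simp add: less_imp_le)
  ultimately have "(\<Sum>j\<in>UNIV. (1 - \<theta> $ j) * u j) = 0"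
    by (meson order_antisym sum_nonneg)
  hence "(1 - \<theta> $ i) * u i = 0"
    using sum_nonneg_eq_0_iff[of UNIV "\<lambda>j. (1 - \<theta> $ j) * u j"] \<open>\<forall>j\<in>UNIV. 0 \<le> (1 - \<theta> $ j) * u j\<close>
    by simp
  moreover have "1 - \<theta> $ i \<noteq> 0" using th[rule_format, of i] by linarith
  ultimately show ?thesis by (meson mult_eq_0_iff)
qed



lemma Minv_ve:
  fixes C :: "real^'n^'n" and x \<theta> v :: "real^'n"
  assumes "(mat 1 - transpose (Wm C x) ** diagm \<theta>) *v v = 0"
  shows "v $ i = (\<Sum>j\<in>UNIV. Wm C x $ j $ i * \<theta> $ j * v $ j)"
proof -
  have "((mat 1 - transpose (Wm C x) ** diagm \<theta>) *v v) $ i = 0" using assms by simp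
  thus ?thesis unfolding M_mult by simp
qed

lemma Minv_abs:
  fixes C :: "real^'n^'n" and x \<theta> v :: "real^'n"
  assumes adm: "admissible_C C" and x: "\<forall>i. 0 \<le> x$i \<and> x$i \<le> 1"
    and th: "\<forall>i. 0 \<le> \<theta>$i \<and> \<theta>$i < 1"
    and ve: "v $ i = (\<Sum>j\<in>UNIV. Wm C x $ j $ i * \<theta> $ j * v $ j)"
  shows "\<bar>v $ i\<bar> \<le> (\<Sum>j\<in>UNIV. Wm C x $ j $ i * \<theta> $ j * \<bar>v $ j\<bar>)"
proof -
  have "\<bar>v $ i\<bar> = \<bar>\<Sum>j\<in>UNIV. Wm C x $ j $ i * \<theta> $ j * v $ j\<bar>" using ve by (rule arg_cong)
  also have "\<dots> \<le> (\<Sum>j\<in>UNIV. \<bar>Wm C x $ j $ i * \<theta> $ j * v $ j\<bar>)" by (rule sum_abs)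
  also have "\<dots> = (\<Sum>j\<in>UNIV. Wm C x $ j $ i * \<theta> $ j * \<bar>v $ j\<bar>)"
  proof (rule sum.cong[OF refl])
    fix j
    have "0 \<le> Wm C x $ j $ i" by (rule W_nonneg[OF adm x])
    moreover have "0 \<le> \<theta> $ j" using th by blast
    ultimately show "\<bar>Wm C x $ j $ i * \<theta> $ j * v $ j\<bar> = Wm C x $ j $ i * \<theta> $ j * \<bar>v $ j\<bar>"
      by (simp add: abs_mult)
  qed
  finally show ?thesis .
qed

lemma M_invertible:
  fixes C :: "real^'n^'n" and x \<theta> :: "real^'n"
  assumes adm: "admissible_C C" and x: "\<forall>i. 0 \<le> x$i \<and> x$i \<le> 1"
    and th: "\<forall>i. 0 \<le> \<theta>$i \<and> \<theta>$i < 1"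
  shows "invertible (mat 1 - transpose (Wm C x) ** diagm \<theta>)"
proof -
  have "\<forall>v. (mat 1 - transpose (Wm C x) ** diagm \<theta>) *v v = 0 \<longrightarrow> v = 0"
  proof (intro allI impI)
    fix v :: "real^'n" assume a: "(mat 1 - transpose (Wm C x) ** diagm \<theta>) *v v = 0"
    have h: "\<forall>i. \<bar>v $ i\<bar> \<le> (\<Sum>j\<in>UNIV. Wm C x $ j $ i * \<theta> $ j * \<bar>v $ j\<bar>)"
      by (intro allI Minv_abs[OF adm x th Minv_ve[OF a]])
    have h0: "\<forall>i. 0 \<le> \<bar>v $ i\<bar>" by simp
    have "\<bar>v $ i\<bar> = 0" for i
      by (rule key_zero[OF adm x th, of "\<lambda>i. \<bar>v $ i\<bar>", OF h0 h])
    thus "v = 0" by (simp add: vec_eq_iff)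
  qed
  hence "\<exists>B. B ** (mat 1 - transpose (Wm C x) ** diagm \<theta>) = mat 1"
    by (rule matrix_left_invertible_ker[THEN iffD2])
  thus ?thesis by (simp only: invertible_left_inverse)
qed

definition yv :: "real^'n^'n \<Rightarrow> real^'n \<Rightarrow> real^'n \<Rightarrow> real^'n" where
  "yv C \<theta> x = matrix_inv (mat 1 - transpose (Wm C x) ** diagm \<theta>) *v ((1 / real CARD('n)) *\<^sub>R ones)"

lemma yv_eq:
  fixes C :: "real^'n^'n" and x \<theta> :: "real^'n"
  assumes adm: "admissible_C C" and x: "\<forall>i. 0 \<le> x$i \<and> x$i \<le> 1"
    and th: "\<forall>i. 0 \<le> \<theta>$i \<and> \<theta>$i < 1"
  shows "yv C \<theta> x $ i = 1 / real CARD('n) + (\<Sum>j\<in>UNIV. Wm C x $ j $ i * \<theta> $ j * yv C \<theta> x $ j)"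
proof -
  let ?M = "mat 1 - transpose (Wm C x) ** diagm \<theta>"
  have "?M ** matrix_inv ?M = mat 1"
    using M_invertible[OF adm x th] unfolding invertible_def matrix_inv_def
    by (metis (mono_tags, lifting) someI_ex)
  hence "?M *v yv C \<theta> x = (1 / real CARD('n)) *\<^sub>R ones"
    unfolding yv_def by (simp add: matrix_vector_mul_assoc)
  hence "(?M *v yv C \<theta> x) $ i = 1 / real CARD('n)" by (simp add: ones_def)
  thus ?thesis unfolding M_mult by simp
qed

lemma diag_mult: "((mat 1 - diagm \<theta>) *v v) $ i = (1 - \<theta> $ i) * v $ i"
proof -
  have "(\<Sum>j\<in>UNIV. ((if i = j then 1 else 0) - (if i = j then \<theta> $ i else 0)) * v $ j)
     = (\<Sum>j\<in>UNIV. if i = j then (1 - \<theta> $ i) * v $ i else 0)" by (rule sum.cong) auto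
  thus ?thesis by (simp add: matrix_vector_mult_def diagm_def mat_def)
qed

lemma Fmap_yv: "Fmap C \<theta> x $ i = (1 - \<theta> $ i) * yv C \<theta> x $ i"
  unfolding Fmap_def yv_def diag_mult ..

lemma yv_nonneg:
  fixes C :: "real^'n^'n" and x \<theta> :: "real^'n"
  assumes adm: "admissible_C C" and x: "\<forall>i. 0 \<le> x$i \<and> x$i \<le> 1"
    and th: "\<forall>i. 0 \<le> \<theta>$i \<and> \<theta>$i < 1"
  shows "0 \<le> yv C \<theta> x $ i"
proof -
  let ?y = "yv C \<theta> x"
  define u where "u j = max 0 (- ?y $ j)" for j
  have "\<forall>i. u i \<le> (\<Sum>j\<in>UNIV. Wm C x $ j $ i * \<theta> $ j * u j)"
  proof
    fix i
    have "(\<Sum>j\<in>UNIV. Wm C x $ j $ i * \<theta> $ j * (- u j)) \<le> (\<Sum>j\<in>UNIV. Wm C x $ j $ i * \<theta> $ j * ?y $ j)"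
      apply (rule sum_mono)
      apply (rule mult_left_mono)
      using W_nonneg[OF adm x] th by (auto simp: u_def)
    hence "- (\<Sum>j\<in>UNIV. Wm C x $ j $ i * \<theta> $ j * u j) \<le> (\<Sum>j\<in>UNIV. Wm C x $ j $ i * \<theta> $ j * ?y $ j)"
      by (simp add: sum_negf)
    moreover have "0 \<le> 1 / real CARD('n)" by simp
    ultimately have "- ?y $ i \<le> (\<Sum>j\<in>UNIV. Wm C x $ j $ i * \<theta> $ j * u j)"
      using yv_eq[OF adm x th, of i] by linarith
    moreover have "0 \<le> (\<Sum>j\<in>UNIV. Wm C x $ j $ i * \<theta> $ j * u j)"
      using W_nonneg[OF adm x] th by (auto intro!: sum_nonneg simp: u_def)
    ultimately show "u i \<le> (\<Sum>j\<in>UNIV. Wm C x $ j $ i * \<theta> $ j * u j)" by (simp add: u_def)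
  qed
  hence "u i = 0" using key_zero[OF adm x th, of u] by (simp add: u_def)
  thus ?thesis by (simp add: u_def)
qed



lemma Fmap_simplex:
  fixes C :: "real^'n^'n" and x \<theta> :: "real^'n"
  assumes adm: "admissible_C C" and x: "\<forall>i. 0 \<le> x$i \<and> x$i \<le> 1"
    and th: "\<forall>i. 0 \<le> \<theta>$i \<and> \<theta>$i < 1"
  shows "Fmap C \<theta> x \<in> prob_simplex"
proof -
  let ?y = "yv C \<theta> x"
  have "(\<Sum>i\<in>UNIV. ?y $ i) = (\<Sum>i\<in>UNIV. 1 / real CARD('n) + (\<Sum>j\<in>UNIV. Wm C x $ j $ i * \<theta> $ j * ?y $ j))"
    by (rule sum.cong[OF refl]) (rule yv_eq[OF adm x th])
  also have "\<dots> = (\<Sum>i\<in>(UNIV::'n set). 1 / real CARD('n)) + (\<Sum>i\<in>UNIV. \<Sum>j\<in>UNIV. Wm C x $ j $ i * \<theta> $ j * ?y $ j)"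
    by (simp add: sum.distrib)
  also have "(\<Sum>i\<in>UNIV. \<Sum>j\<in>UNIV. Wm C x $ j $ i * \<theta> $ j * ?y $ j) = (\<Sum>j\<in>UNIV. \<Sum>i\<in>UNIV. Wm C x $ j $ i * \<theta> $ j * ?y $ j)" by (rule sum.swap)
  also have "\<dots> = (\<Sum>j\<in>UNIV. \<theta> $ j * ?y $ j * (\<Sum>i\<in>UNIV. Wm C x $ j $ i))"
    by (simp add: sum_distrib_left mult_ac)
  also have "\<dots> = (\<Sum>j\<in>UNIV. \<theta> $ j * ?y $ j)" using W_rowsum[OF adm] by simp
  finally have "(\<Sum>i\<in>UNIV. ?y $ i) = 1 + (\<Sum>j\<in>UNIV. \<theta> $ j * ?y $ j)" by simp
  hence s: "(\<Sum>i\<in>UNIV. Fmap C \<theta> x $ i) = 1"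
    by (simp add: Fmap_yv algebra_simps sum_subtractf)
  have "\<forall>i. 0 \<le> Fmap C \<theta> x $ i"
  proof
    fix i show "0 \<le> Fmap C \<theta> x $ i"
    proof -
      have "0 \<le> (1 - \<theta> $ i) * yv C \<theta> x $ i"
        using yv_nonneg[OF adm x th, of i] th[rule_format, of i] by (intro mult_nonneg_nonneg) auto
      thus ?thesis by (simp only: Fmap_yv)
    qed
  qed
  then have "(\<forall>i. 0 \<le> Fmap C \<theta> x $ i) \<and> (\<Sum>i\<in>UNIV. Fmap C \<theta> x $ i) = 1" using s by (rule conjI)
  then show ?thesis unfolding prob_simplex_def mem_Collect_eq .
qed




lemma quad_root:
  fixes n t k :: real
  assumes n: "0 < n" and t: "0 < t" and k: "0 \<le> k" and d: "4 * t * k \<le> n"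
  defines "z \<equiv> (n - sqrt (n^2 - 4 * n * t * k)) / (2 * n * t)"
  shows "n * t * z^2 - n * z + k = 0" and "0 \<le> z"
proof -
  define S where "S = sqrt (n^2 - 4 * n * t * k)"
  have D: "0 \<le> n^2 - 4 * n * t * k"
  proof -
    have e1: "4 * n * t * k = n * (4 * t * k)" by simp
    have e2: "n^2 = n * n" by (simp add: power2_eq_square)
    have "n * (4 * t * k) \<le> n * n" using d n by (intro mult_left_mono) auto
    thus ?thesis using e1 e2 by linarith
  qed
  have S2: "S^2 = n^2 - 4 * n * t * k" unfolding S_def using D by simp
  have S0: "0 \<le> S" unfolding S_def using D by simp
  have Sn: "S \<le> n"
  proof -
    have "S^2 \<le> n^2" using S2 n t k by (simp add: mult_nonneg_nonneg)
    thus ?thesis using S0 n by (simp add: power2_le_iff_abs_le)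
  qed
  have zS: "z = (n - S) / (2 * n * t)" unfolding z_def S_def ..
  have num0: "(n-S)^2 - 2*n*(n-S) + 4*n*t*k = S^2 - n^2 + 4*n*t*k"
    by (simp add: power2_eq_square algebra_simps)
  have num: "(n-S)^2 - 2*n*(n-S) + 4*n*t*k = 0" using num0 S2 by simp
  have a: "n*t*z^2 = (n-S)^2/(4*n*t)" unfolding zS using n t
    by (simp add: power_divide power_mult_distrib) (simp add: field_simps power2_eq_square)
  have b: "n*z = 2*n*(n-S)/(4*n*t)" unfolding zS using n t by (simp add: field_simps)
  have c: "k = 4*n*t*k/(4*n*t)" using n t by simp
  have "n * t * z^2 - n * z + k = ((n-S)^2 - 2*n*(n-S) + 4*n*t*k)/(4*n*t)"
    unfolding a b by (subst c) (simp add: diff_divide_distrib add_divide_distrib)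
  thus "n * t * z^2 - n * z + k = 0" using num by simp
  show "0 \<le> z" unfolding zS using n t Sn by simp
qed

lemma contr:
  fixes t a b c :: real
  assumes pa: "0 < 1 - t * a" and pb: "0 < 1 - t * b"
  shows "c / (1 - t * a) - c / (1 - t * b) = c * t * (a - b) / ((1 - t * a) * (1 - t * b))"
  using pa pb by (simp add: field_simps)

lemma ta_lt:
  fixes t a :: real
  assumes "0 \<le> t" "t < 1" "0 \<le> a" "a \<le> 1"
  shows "0 < 1 - t * a" "1 - t \<le> 1 - t * a"
proof -
  have "t * a \<le> t" using assms by (simp add: mult_left_le)
  thus "0 < 1 - t * a" "1 - t \<le> 1 - t * a" using assms by simp_all
qed


lemma limval_props:
  fixes n t :: real
  assumes n: "2 \<le> n" and t: "0 < t" "t < 1"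
  defines "z \<equiv> (n - sqrt (n^2 - 4 * n * t * (1 - t))) / (2 * n * t)"
  shows "0 \<le> z" "z \<le> 1 / n" "0 < 1 - t * z" "z = (1 - t) / (n * (1 - t * z))"
    "t * (1 - z) / (1 - t * z) = 1 - n * z"
proof -
  have d: "4 * t * (1 - t) \<le> n"
  proof -
    have "4 * t * (1 - t) = 1 - (2*t - 1)^2" by (simp add: power2_eq_square algebra_simps)
    also have "\<dots> \<le> 1" by simp
    finally show ?thesis using n by linarith
  qed
  have n0: "0 < n" using n by simp
  have q: "n * t * z^2 - n * z + (1 - t) = 0" and z0: "0 \<le> z"
    using quad_root[OF n0 t(1) _ d] t unfolding z_def by auto
  show "0 \<le> z" by (rule z0)
  define S where "S = sqrt (n^2 - 4 * n * t * (1 - t))"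
  have zS: "z = (n - S) / (2 * n * t)" unfolding z_def S_def ..
  have D: "(n - 2*t)^2 \<le> n^2 - 4 * n * t * (1 - t)"
  proof -
    have "(n - 2*t)^2 = n^2 - 4*n*t*(1-t) - (4*n*t^2 - 4*t^2)" by (simp add: power2_eq_square algebra_simps)
    moreover have "4*t^2 \<le> 4*n*t^2" using n by (simp add: mult_right_mono)
    ultimately show ?thesis by linarith
  qed
  have "n - 2*t \<le> S" unfolding S_def
    using real_sqrt_le_mono[OF D] n t by simp
  hence "z \<le> (2*t) / (2*n*t)" unfolding zS using n t by (intro divide_right_mono) auto
  also have "\<dots> = 1 / n" using t by simp
  finally show zn: "z \<le> 1 / n" .
  have "t * z \<le> 1 / 2"
  proof -
    have "t * z \<le> 1 * (1 / n)" using zn t z0 by (intro mult_mono) auto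
    also have "\<dots> \<le> 1 / 2" using n by (simp add: divide_le_eq)
    finally show ?thesis .
  qed
  thus pz: "0 < 1 - t * z" by simp
  have h: "n * z * (1 - t * z) = 1 - t" using q by (simp add: algebra_simps power2_eq_square)
  have nz: "n * (1 - t * z) \<noteq> 0" using pz n0 by simp
  have "z * (n * (1 - t * z)) = 1 - t" using h by (simp add: algebra_simps)
  thus zf: "z = (1 - t) / (n * (1 - t * z))" using nz by (simp add: eq_divide_eq)
  have "(1 - n * z) * (1 - t * z) = (1 - t * z) - n * z * (1 - t * z)" by (simp add: algebra_simps)
  also have "\<dots> = (1 - t * z) - (1 - t)" using h by simp
  also have "\<dots> = t * (1 - z)" by (simp add: algebra_simps)
  finally have "(1 - n * z) * (1 - t * z) = t * (1 - z)" .
  thus "t * (1 - z) / (1 - t * z) = 1 - n * z" using pz by (simp add: divide_eq_eq)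
qed

lemma g_contr:
  fixes n t a b :: real
  assumes n: "2 \<le> n" and t: "0 \<le> t" "t < 1" and a: "0 \<le> a" "a \<le> 1 / n" and b: "0 \<le> b" "b \<le> 1 / n"
  shows "\<bar>(1 - t) / (n * (1 - t * a)) - (1 - t) / (n * (1 - t * b))\<bar> \<le> \<bar>a - b\<bar> / 2"
proof -
  have n2: "1 / n \<le> 1 / 2" using n by (simp add: divide_le_eq)
  have ta: "t * a \<le> 1 / 2" using t a n2 by (metis dual_order.trans less_eq_real_def mult_left_le_one_le)
  have tb: "t * b \<le> 1 / 2" using t b n2 by (metis dual_order.trans less_eq_real_def mult_left_le_one_le)
  define D where "D = (1 - t * a) * (1 - t * b)"
  have D4: "1 / 4 \<le> D" unfolding D_def using ta tb
    using mult_mono[of "1/2" "1 - t*a" "1/2" "1 - t*b"] by simp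
  have Dp: "0 < D" using D4 by simp
  have e: "(1 - t) / (n * (1 - t * a)) - (1 - t) / (n * (1 - t * b)) = ((1 - t) / n) * t * (a - b) / D"
    unfolding D_def using contr[of t a b "(1 - t) / n"] ta tb by (simp add: divide_divide_eq_left mult.commute)
  have tt: "t * (1 - t) \<le> 1 / 4"
  proof -
    have "t * (1 - t) = 1/4 - (t - 1/2)^2" by (simp add: power2_eq_square algebra_simps)
    thus ?thesis by simp
  qed
  have K: "((1 - t) / n) * t / D \<le> 1 / 2"
  proof -
    have "n * D \<ge> 2 * (1 / 4)" using mult_mono[OF n D4] n by simp
    hence "2 * ((1 - t) * t) \<le> n * D" using tt by (simp add: mult.commute)
    thus ?thesis using Dp n by (simp add: field_simps)
  qed
  have K0: "0 \<le> ((1 - t) / n) * t / D" using t n Dp by simp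
  have "\<bar>((1 - t) / n) * t * (a - b) / D\<bar> = (((1 - t) / n) * t / D) * \<bar>a - b\<bar>"
    using t n Dp by (simp add: abs_mult abs_divide)
  also have "\<dots> \<le> (1 / 2) * \<bar>a - b\<bar>" using K by (intro mult_right_mono) auto
  finally show ?thesis using e by simp
qed

lemma phi_lip:
  fixes t a b :: real
  assumes t: "0 \<le> t" "t < 1" and a: "0 \<le> a" "a \<le> 1" and b: "0 \<le> b" "b \<le> 1"
  shows "\<bar>t * (1 - a) / (1 - t * a) - t * (1 - b) / (1 - t * b)\<bar> \<le> t / (1 - t) * \<bar>a - b\<bar>"
proof -
  note A = ta_lt[OF t a] and B = ta_lt[OF t b]
  have e: "t * (1 - a) / (1 - t * a) - t * (1 - b) / (1 - t * b) = t * (1 - t) * (b - a) / ((1 - t * a) * (1 - t * b))"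
    using A B by (simp add: field_simps)
  have D: "(1 - t) * (1 - t) \<le> (1 - t * a) * (1 - t * b)" using A B t by (intro mult_mono) auto
  have p: "0 < (1 - t) * (1 - t)" using t by simp
  have "\<bar>t * (1 - t) * (b - a) / ((1 - t * a) * (1 - t * b))\<bar> = t * (1 - t) * \<bar>a - b\<bar> / ((1 - t * a) * (1 - t * b))"
    using A B t by (simp add: abs_mult abs_divide abs_minus_commute)
  also have "\<dots> \<le> t * (1 - t) * \<bar>a - b\<bar> / ((1 - t) * (1 - t))"
    using D p t A B by (intro divide_left_mono) (auto intro!: mult_pos_pos)
  also have "\<dots> = (1 - t) * (t * \<bar>a - b\<bar>) / ((1 - t) * (1 - t))" by (simp add: mult_ac)
  also have "\<dots> = t * \<bar>a - b\<bar> / (1 - t)" using t by (subst mult_divide_mult_cancel_left) auto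
  also have "\<dots> = t / (1 - t) * \<bar>a - b\<bar>" by simp
  finally show ?thesis using e by simp
qed

lemma phi_bounds:
  fixes t a :: real
  assumes t: "0 \<le> t" "t < 1" and a: "0 \<le> a" "a \<le> 1"
  shows "0 \<le> t * (1 - a) / (1 - t * a)" "t * (1 - a) / (1 - t * a) \<le> t"
proof -
  note A = ta_lt[OF t a]
  show "0 \<le> t * (1 - a) / (1 - t * a)" using A t a by simp
  have "1 - a \<le> 1 - t * a" using t a by (simp add: mult_left_le_one_le)
  hence "t * (1 - a) \<le> t * (1 - t * a)" using t by (intro mult_left_mono) auto
  thus "t * (1 - a) / (1 - t * a) \<le> t" using A by (simp add: divide_le_eq)
qed

lemma l_step:
  fixes n t a w X Y :: real
  assumes n: "0 < n" and t: "0 < t" "t < 1" and a: "0 \<le> a" "a \<le> 4/5"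
    and tw: "t * w < 1 - 4 * t / 5" and w0: "0 \<le> w" and wf: "w = (1 - t) * X / (n * (1 - t * w))"
  shows "\<bar>(1 - t) * Y / (n * (1 - t * a)) - w\<bar> \<le> (t * w / (1 - 4 * t / 5)) * \<bar>a - w\<bar> + \<bar>Y - X\<bar> / n"
proof -
  have ta: "t * a \<le> 4 * t / 5" using t a by simp
  have pa: "0 < 1 - t * a" using ta t by linarith
  have pw: "0 < 1 - t * w" using tw t by linarith
  have p45: "0 < 1 - 4 * t / 5" using t by simp
  have e1: "(1 - t) * Y / (n * (1 - t * a)) - (1 - t) * X / (n * (1 - t * a)) = ((1 - t) / (1 - t * a)) * ((Y - X) / n)"
  proof -
    have "(1 - t) * Y / (n * (1 - t * a)) - (1 - t) * X / (n * (1 - t * a)) = ((1 - t) * Y - (1 - t) * X) / (n * (1 - t * a))"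
      by (simp add: diff_divide_distrib)
    also have "\<dots> = ((1 - t) * (Y - X)) / (n * (1 - t * a))" by (simp add: right_diff_distrib)
    also have "\<dots> = ((1 - t) / (1 - t * a)) * ((Y - X) / n)" by (simp add: mult.commute)
    finally show ?thesis .
  qed
  have e2: "(1 - t) * X / (n * (1 - t * a)) - w = t * w * (a - w) / (1 - t * a)"
  proof -
    have "(1 - t) * X / (n * (1 - t * a)) - (1 - t) * X / (n * (1 - t * w))
        = ((1 - t) * X / n) / (1 - t * a) - ((1 - t) * X / n) / (1 - t * w)" by simp
    also have "\<dots> = ((1 - t) * X / n) * t * (a - w) / ((1 - t * a) * (1 - t * w))"
      by (rule contr[OF pa pw])
    also have "\<dots> = (((1 - t) * X / n) / (1 - t * w)) * t * (a - w) / (1 - t * a)"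
      using pa pw by (simp add: field_simps)
    also have "((1 - t) * X / n) / (1 - t * w) = w" using wf by simp
    finally show ?thesis using wf by simp
  qed
  have f1: "(1 - t) / (1 - t * a) \<le> 1" using pa t a by (simp add: divide_le_eq mult_left_le)
  have f1': "0 \<le> (1 - t) / (1 - t * a)" using pa t by simp
  have b1: "\<bar>((1 - t) / (1 - t * a)) * ((Y - X) / n)\<bar> \<le> \<bar>Y - X\<bar> / n"
  proof -
    have "\<bar>((1 - t) / (1 - t * a)) * ((Y - X) / n)\<bar> = ((1 - t) / (1 - t * a)) * (\<bar>Y - X\<bar> / n)"
      using f1' n pa t by (simp add: abs_mult abs_divide abs_of_pos)
    also have "\<dots> \<le> 1 * (\<bar>Y - X\<bar> / n)" using f1 n by (intro mult_right_mono) auto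
    finally show ?thesis by simp
  qed
  have b2: "\<bar>t * w * (a - w) / (1 - t * a)\<bar> \<le> (t * w / (1 - 4 * t / 5)) * \<bar>a - w\<bar>"
  proof -
    have "\<bar>t * w * (a - w) / (1 - t * a)\<bar> = t * w * \<bar>a - w\<bar> / (1 - t * a)"
      using pa t w0 by (simp add: abs_mult abs_divide)
    also have "\<dots> \<le> t * w * \<bar>a - w\<bar> / (1 - 4 * t / 5)"
      apply (rule divide_left_mono)
      using ta apply linarith
      using t w0 apply simp
      using pa p45 by (rule mult_pos_pos)
    finally show ?thesis by simp
  qed
  have "(1 - t) * Y / (n * (1 - t * a)) - w = ((1 - t) / (1 - t * a)) * ((Y - X) / n) + t * w * (a - w) / (1 - t * a)"
    using e1 e2 by linarith
  hence "\<bar>(1 - t) * Y / (n * (1 - t * a)) - w\<bar> = \<bar>((1 - t) / (1 - t * a)) * ((Y - X) / n) + t * w * (a - w) / (1 - t * a)\<bar>"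
    by (rule arg_cong)
  moreover have "\<bar>((1 - t) / (1 - t * a)) * ((Y - X) / n) + t * w * (a - w) / (1 - t * a)\<bar>
     \<le> \<bar>((1 - t) / (1 - t * a)) * ((Y - X) / n)\<bar> + \<bar>t * w * (a - w) / (1 - t * a)\<bar>"
    by (rule abs_triangle_ineq)
  ultimately show ?thesis using b1 b2 by linarith
qed




lemma rec_bound:
  fixes e :: "nat \<Rightarrow> real"
  assumes e0: "\<forall>s. 0 \<le> e s" and q: "0 \<le> q" "q < 1" and K: "0 \<le> K"
    and step: "\<forall>s. e (Suc s) \<le> q * e s + K * (1/2)^s"
  shows "\<exists>A r. 0 \<le> A \<and> 0 < r \<and> r < 1 \<and> (\<forall>s. e s \<le> A * r^s)"
proof -
  define r where "r = (1 + max q (1/2)) / 2"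
  have r1: "1/2 < r" unfolding r_def by (simp add: max_def)
  have r2: "q < r" using q unfolding r_def by (simp add: max_def)
  have r3: "r < 1" using q unfolding r_def by (simp add: max_def)
  define A where "A = e 0 + K / (r - q)"
  have KA: "K / (r - q) \<ge> 0" using K r2 by simp
  have A0: "0 \<le> A" unfolding A_def using KA e0 by simp
  have rqA: "K \<le> (r - q) * A"
  proof -
    have "(r - q) * A = (r - q) * e 0 + K" unfolding A_def using r2 by (simp add: distrib_left)
    moreover have "0 \<le> (r - q) * e 0" using r2 e0 by simp
    ultimately show ?thesis by linarith
  qed
  have "e s \<le> A * r^s" for s
  proof (induction s)
    case 0 show ?case unfolding A_def using KA by simp
  next
    case (Suc s)
    have h: "(1/2::real)^s \<le> r^s" using r1 by (intro power_mono) auto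
    have rs: "0 \<le> r^s" using r1 by simp
    have "e (Suc s) \<le> q * e s + K * (1/2)^s" using step by blast
    also have "\<dots> \<le> q * (A * r^s) + K * r^s"
      using Suc.IH h q K by (intro add_mono mult_left_mono) auto
    also have "\<dots> = (q * A + K) * r^s" by (simp add: algebra_simps)
    also have "\<dots> \<le> (r * A) * r^s" using rqA rs by (intro mult_right_mono) (auto simp: algebra_simps)
    also have "\<dots> = A * r^(Suc s)" by simp
    finally show ?case .
  qed
  thus ?thesis using A0 r1 r3 by (intro exI[of _ A] exI[of _ r]) auto
qed

lemma shift_bound:
  fixes e :: "nat \<Rightarrow> real"
  assumes st: "\<forall>s. e (Suc s) \<le> A * r^s" and r: "0 < r" "r < 1" and A: "0 \<le> A"
  shows "\<forall>s. e s \<le> max (e 0) (A / r) * r^s"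
proof
  fix s show "e s \<le> max (e 0) (A / r) * r^s"
  proof (cases s)
    case 0 thus ?thesis by simp
  next
    case (Suc m)
    have "e s \<le> A * r^m" using st Suc by simp
    also have "\<dots> = (A / r) * r^s" using Suc r by simp
    also have "\<dots> \<le> max (e 0) (A / r) * r^s" using r by (intro mult_right_mono) auto
    finally show ?thesis .
  qed
qed

lemma sum_bound:
  fixes f :: "'a::finite \<Rightarrow> nat \<Rightarrow> real"
  assumes "\<forall>i. \<exists>c r. 0 \<le> c \<and> 0 \<le> r \<and> r < 1 \<and> (\<forall>s. \<bar>f i s\<bar> \<le> c * r^s)"
  shows "\<exists>c r. 0 \<le> c \<and> 0 \<le> r \<and> r < 1 \<and> (\<forall>s. (\<Sum>i\<in>UNIV. \<bar>f i s\<bar>) \<le> c * r^s)"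
proof -
  obtain c r where cr: "\<forall>i. 0 \<le> c i \<and> 0 \<le> r i \<and> r i < 1 \<and> (\<forall>s. \<bar>f i s\<bar> \<le> c i * r i ^ s)"
    using assms by metis
  define R where "R = Max (range r)"
  have fin: "finite (range r)" by simp
  have rR: "r i \<le> R" for i unfolding R_def using fin by (intro Max_ge) auto
  have "R \<in> range r" unfolding R_def using fin by (intro Max_in) auto
  then obtain i0 where "R = r i0" by blast
  hence R1: "R < 1" and R0: "0 \<le> R" using cr by auto
  have "(\<Sum>i\<in>UNIV. \<bar>f i s\<bar>) \<le> (\<Sum>i\<in>UNIV. c i) * R^s" for s
  proof -
    have "(\<Sum>i\<in>UNIV. \<bar>f i s\<bar>) \<le> (\<Sum>i\<in>UNIV. c i * R^s)"
    proof (rule sum_mono)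
      fix i
      have "\<bar>f i s\<bar> \<le> c i * r i ^ s" using cr by blast
      also have "\<dots> \<le> c i * R^s" using cr rR[of i] by (intro mult_left_mono power_mono) auto
      finally show "\<bar>f i s\<bar> \<le> c i * R^s" .
    qed
    also have "\<dots> = (\<Sum>i\<in>UNIV. c i) * R^s" by (simp add: sum_distrib_right)
    finally show ?thesis .
  qed
  moreover have "0 \<le> (\<Sum>i\<in>UNIV. c i)" using cr by (simp add: sum_nonneg)
  ultimately show ?thesis using R0 R1 by blast
qed




definition phi :: "real \<Rightarrow> real \<Rightarrow> real" where "phi t s = t * (1 - s) / (1 - t * s)"

locale setting =
  fixes C :: "real^'n^'n" and \<theta> :: "real^'n" and l :: 'n
  assumes n2: "CARD('n) \<ge> 2" and adm: "admissible_C C"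
    and th: "\<forall>i. 0 \<le> \<theta>$i \<and> \<theta>$i < 1" and star: "star_topology C l" and thl: "0 < \<theta>$l"
begin


lemma nn2: "2 \<le> (real CARD('n))" using n2 by simp
lemma nn0: "0 < (real CARD('n))" using n2 by simp

lemma C_nonneg: "0 \<le> C$i$j" using adm by (simp add: admissible_C_def)

lemma C_off: assumes "i \<noteq> l" "j \<noteq> l" shows "C$i$j = 0"
proof -
  have "\<not> 0 < C$i$j" using star assms unfolding star_topology_def by blast
  thus ?thesis using C_nonneg[of i j] by simp
qed

lemma C_diag: "C$i$i = 0" using adm by (simp add: admissible_C_def)

lemma C_to_l: assumes "i \<noteq> l" shows "C$i$l = 1"
proof -
  have "(\<Sum>j\<in>UNIV. C$i$j) = (\<Sum>j\<in>UNIV. if j = l then C$i$l else 0)"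
  proof (rule sum.cong[OF refl])
    fix j show "C$i$j = (if j = l then C$i$l else 0)"
      using C_off[OF assms, of j] by (cases "j = l") simp_all
  qed
  also have "\<dots> = C$i$l" by simp
  finally show ?thesis using adm by (simp add: admissible_C_def)
qed

lemma E_i:
  assumes x: "\<forall>i. 0 \<le> x$i \<and> x$i \<le> 1" and il: "i \<noteq> l"
  shows "yv C \<theta> x $ i = 1/(real CARD('n)) + x$i*\<theta>$i*yv C \<theta> x $ i + (1-x$l)*C$l$i*\<theta>$l*yv C \<theta> x $ l"
proof -
  let ?y = "yv C \<theta> x"
  have "(\<Sum>j\<in>UNIV. Wm C x $j$i * \<theta>$j * ?y$j) = (\<Sum>j\<in>UNIV. (if j = i then x$i*\<theta>$i*?y$i else 0) + (if j = l then (1-x$l)*C$l$i*\<theta>$l*?y$l else 0))"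
  proof (rule sum.cong[OF refl])
    fix j
    show "Wm C x $j$i * \<theta>$j * ?y$j = (if j = i then x$i*\<theta>$i*?y$i else 0) + (if j = l then (1-x$l)*C$l$i*\<theta>$l*?y$l else 0)"
    proof (cases "j = i")
      case True thus ?thesis using il by (simp add: W_comp C_diag)
    next
      case False
      show ?thesis
      proof (cases "j = l")
        case True thus ?thesis using il by (simp add: W_comp)
      next
        case False
        thus ?thesis using \<open>j \<noteq> i\<close> C_off[OF False il] by (simp add: W_comp)
      qed
    qed
  qed
  also have "\<dots> = x$i*\<theta>$i*?y$i + (1-x$l)*C$l$i*\<theta>$l*?y$l" by (simp add: sum.distrib)
  finally have e: "(\<Sum>j\<in>UNIV. Wm C x $j$i * \<theta>$j * ?y$j) = x$i*\<theta>$i*?y$i + (1-x$l)*C$l$i*\<theta>$l*?y$l" .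
  show ?thesis using yv_eq[OF adm x th, of i] e by linarith
qed

lemma E_l:
  assumes x: "\<forall>i. 0 \<le> x$i \<and> x$i \<le> 1"
  shows "yv C \<theta> x $ l = 1/(real CARD('n)) + x$l*\<theta>$l*yv C \<theta> x $ l + (\<Sum>j\<in>UNIV. if j = l then 0 else (1-x$j)*\<theta>$j*yv C \<theta> x $ j)"
proof -
  let ?y = "yv C \<theta> x"
  have "(\<Sum>j\<in>UNIV. Wm C x $j$l * \<theta>$j * ?y$j) = (\<Sum>j\<in>UNIV. (if j = l then x$l*\<theta>$l*?y$l else 0) + (if j = l then 0 else (1-x$j)*\<theta>$j*?y$j))"
  proof (rule sum.cong[OF refl])
    fix j
    show "Wm C x $j$l * \<theta>$j * ?y$j = (if j = l then x$l*\<theta>$l*?y$l else 0) + (if j = l then 0 else (1-x$j)*\<theta>$j*?y$j)"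
    proof (cases "j = l")
      case True thus ?thesis by (simp add: W_comp C_diag)
    next
      case False thus ?thesis using C_to_l[OF False] by (simp add: W_comp)
    qed
  qed
  also have "\<dots> = x$l*\<theta>$l*?y$l + (\<Sum>j\<in>UNIV. if j = l then 0 else (1-x$j)*\<theta>$j*?y$j)" by (simp add: sum.distrib)
  finally have e: "(\<Sum>j\<in>UNIV. Wm C x $j$l * \<theta>$j * ?y$j) = x$l*\<theta>$l*?y$l + (\<Sum>j\<in>UNIV. if j = l then 0 else (1-x$j)*\<theta>$j*?y$j)" .
  show ?thesis using yv_eq[OF adm x th, of l] e by linarith
qed

lemma pos_den:
  assumes x: "\<forall>i. 0 \<le> x$i \<and> x$i \<le> 1"
  shows "0 < 1 - \<theta>$i * x$i" "1 - \<theta>$i \<le> 1 - \<theta>$i * x$i"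
  using ta_lt[of "\<theta>$i" "x$i"] th x by auto

lemma y_P:
  assumes x: "\<forall>i. 0 \<le> x$i \<and> x$i \<le> 1" and il: "i \<noteq> l" and cl: "C$l$i = 0"
  shows "yv C \<theta> x $ i = 1 / ((real CARD('n)) * (1 - \<theta>$i * x$i))"
proof -
  let ?y = "yv C \<theta> x"
  have z: "(1-x$l)*C$l$i*\<theta>$l*?y$l = 0" using cl by simp
  have h1: "?y$i = 1/(real CARD('n)) + x$i*\<theta>$i*?y$i" using E_i[OF x il] z by linarith
  have h2: "?y$i * (1 - \<theta>$i * x$i) = ?y$i - x$i*\<theta>$i*?y$i" by (simp add: algebra_simps)
  have h3: "?y$i * (1 - \<theta>$i * x$i) = 1/(real CARD('n))" using h1 h2 by linarith
  have nz: "1 - \<theta>$i * x$i \<noteq> 0" using pos_den[OF x, of i] by simp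
  have "?y$i = (1/(real CARD('n))) / (1 - \<theta>$i * x$i)" by (rule eq_divide_imp[OF nz h3])
  thus ?thesis by simp
qed

lemma F_P:
  assumes x: "\<forall>i. 0 \<le> x$i \<and> x$i \<le> 1" and il: "i \<noteq> l" and cl: "C$l$i = 0"
  shows "Fmap C \<theta> x $ i = (1 - \<theta>$i) / ((real CARD('n)) * (1 - \<theta>$i * x$i))"
  unfolding Fmap_yv y_P[OF x il cl] by simp

lemma sumP:
  assumes x: "\<forall>i. 0 \<le> x$i \<and> x$i \<le> 1" and hP: "\<forall>j. 0 < \<theta>$j \<and> j \<noteq> l \<longrightarrow> C$l$j = 0"
  shows "(\<Sum>j\<in>UNIV. if j = l then 0 else (1-x$j)*\<theta>$j*yv C \<theta> x $ j) = (\<Sum>j\<in>{j. 0 < \<theta> $ j \<and> j \<noteq> l}. phi (\<theta>$j) (x$j)) / (real CARD('n))"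
proof -
  define g where "g j = (if j = l then 0 else (1-x$j)*\<theta>$j*yv C \<theta> x $ j)" for j
  have z: "\<forall>j\<in>UNIV - {j. 0 < \<theta> $ j \<and> j \<noteq> l}. g j = 0"
  proof
    fix j assume "j \<in> UNIV - {j. 0 < \<theta> $ j \<and> j \<noteq> l}"
    hence "j = l \<or> \<theta>$j = 0" using th[rule_format, of j] by auto
    thus "g j = 0" unfolding g_def by auto
  qed
  have "(\<Sum>j\<in>UNIV. g j) = (\<Sum>j\<in>{j. 0 < \<theta> $ j \<and> j \<noteq> l}. g j)"
    by (rule sum.mono_neutral_right) (use z in auto)
  also have "\<dots> = (\<Sum>j\<in>{j. 0 < \<theta> $ j \<and> j \<noteq> l}. phi (\<theta>$j) (x$j) / (real CARD('n)))"
  proof (rule sum.cong[OF refl])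
    fix j assume "j \<in> {j. 0 < \<theta> $ j \<and> j \<noteq> l}"
    hence jl: "j \<noteq> l" and cl: "C$l$j = 0" using hP by auto
    have d: "1 - \<theta>$j * x$j \<noteq> 0" using pos_den[OF x, of j] by simp
    show "g j = phi (\<theta>$j) (x$j) / (real CARD('n))"
      unfolding g_def phi_def y_P[OF x jl cl] using jl d nn0 by (simp add: field_simps)
  qed
  also have "\<dots> = (\<Sum>j\<in>{j. 0 < \<theta> $ j \<and> j \<noteq> l}. phi (\<theta>$j) (x$j)) / (real CARD('n))" by (simp add: sum_divide_distrib)
  finally show ?thesis unfolding g_def .
qed

lemma F_l:
  assumes x: "\<forall>i. 0 \<le> x$i \<and> x$i \<le> 1" and hP: "\<forall>j. 0 < \<theta>$j \<and> j \<noteq> l \<longrightarrow> C$l$j = 0"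
  shows "Fmap C \<theta> x $ l = (1 - \<theta>$l) * (1 + (\<Sum>j\<in>{j. 0 < \<theta> $ j \<and> j \<noteq> l}. phi (\<theta>$j) (x$j))) / ((real CARD('n)) * (1 - \<theta>$l * x$l))"
proof -
  let ?y = "yv C \<theta> x" and ?S = "\<Sum>j\<in>{j. 0 < \<theta> $ j \<and> j \<noteq> l}. phi (\<theta>$j) (x$j)"
  have h1: "?y$l = 1/(real CARD('n)) + x$l*\<theta>$l*?y$l + ?S / (real CARD('n))" using E_l[OF x] sumP[OF x hP] by linarith
  have h2: "?y$l * (1 - \<theta>$l * x$l) = ?y$l - x$l*\<theta>$l*?y$l" by (simp add: algebra_simps)
  have h4: "1/(real CARD('n)) + ?S/(real CARD('n)) = (1 + ?S)/(real CARD('n))" by (simp add: add_divide_distrib)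
  have h3: "?y$l * (1 - \<theta>$l * x$l) = (1 + ?S)/(real CARD('n))" using h1 h2 h4 by linarith
  have nz: "1 - \<theta>$l * x$l \<noteq> 0" using pos_den[OF x, of l] by simp
  have "?y$l = ((1 + ?S)/(real CARD('n))) / (1 - \<theta>$l * x$l)" by (rule eq_divide_imp[OF nz h3])
  thus ?thesis unfolding Fmap_yv by simp
qed

lemma F_f:
  assumes x: "\<forall>i. 0 \<le> x$i \<and> x$i \<le> 1" and t0: "\<theta>$i = 0"
  shows "Fmap C \<theta> x $ i = 1/(real CARD('n)) + (1 - x$l) * C$l$i * \<theta>$l * (Fmap C \<theta> x $ l) / (1 - \<theta>$l)"
proof -
  let ?y = "yv C \<theta> x"
  have il: "i \<noteq> l" using t0 thl by auto
  have h1: "?y$i = 1/(real CARD('n)) + (1-x$l)*C$l$i*\<theta>$l*?y$l" using E_i[OF x il] t0 by simp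
  have nz: "1 - \<theta>$l \<noteq> 0" using th[rule_format, of l] by simp
  have "(1 - x$l) * C$l$i * \<theta>$l * (Fmap C \<theta> x $ l) / (1 - \<theta>$l) = (1-x$l)*C$l$i*\<theta>$l*?y$l"
    unfolding Fmap_yv using nz by simp
  thus ?thesis using h1 t0 unfolding Fmap_yv by simp
qed

lemma simplex_box:
  assumes "y \<in> prob_simplex" shows "\<forall>i. 0 \<le> y$i \<and> y$i \<le> 1"
proof
  fix i
  have nn: "\<forall>j\<in>UNIV. 0 \<le> y$j" and s: "(\<Sum>j\<in>UNIV. y$j) = 1" using assms by (auto simp: prob_simplex_def)
  have "y$i \<le> (\<Sum>j\<in>UNIV. y$j)" by (rule member_le_sum) (use nn in auto)
  thus "0 \<le> y$i \<and> y$i \<le> 1" using s nn by simp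
qed

lemma traj_simplex:
  assumes "trajectory C \<theta> x" shows "x s \<in> prob_simplex"
proof (induction s)
  case 0 thus ?case using assms by (simp add: trajectory_def)
next
  case (Suc s)
  have "x (Suc s) = Fmap C \<theta> (x s)" using assms by (simp add: trajectory_def)
  thus ?case using Fmap_simplex[OF adm simplex_box[OF Suc.IH] th] by simp
qed

lemma traj_box: assumes "trajectory C \<theta> x" shows "\<forall>i. 0 \<le> x s $ i \<and> x s $ i \<le> 1"
  by (rule simplex_box[OF traj_simplex[OF assms]])

lemma traj_step: assumes "trajectory C \<theta> x" shows "x (Suc s) = Fmap C \<theta> (x s)"
  using assms by (simp add: trajectory_def)

lemma part_i_bound:
  assumes tr: "trajectory C \<theta> x" and il: "i \<noteq> l" and ti: "0 < \<theta>$i" and cl: "C$l$i = 0"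
  shows "\<bar>x s $ i - limval (real CARD('n)) (\<theta>$i)\<bar> \<le> (1/2)^s"
proof -
  define t where "t = \<theta>$i"
  define z where "z = limval (real CARD('n)) t"
  have t1: "t < 1" using th unfolding t_def by auto
  note LP = limval_props[OF nn2 ti[folded t_def] t1, folded limval_def z_def]
  have z0: "0 \<le> z" and z1: "z \<le> 1/(real CARD('n))" and zf: "z = (1 - t) / ((real CARD('n)) * (1 - t * z))" using LP by auto
  have xs: "x (Suc s) $ i = (1 - t) / ((real CARD('n)) * (1 - t * x s $ i))" for s
    unfolding traj_step[OF tr] t_def by (rule F_P[OF traj_box[OF tr] il cl])
  have rng: "0 \<le> x (Suc s) $ i \<and> x (Suc s) $ i \<le> 1/(real CARD('n))" for s
  proof -
    have p: "0 < 1 - t * x s $ i" "1 - t \<le> 1 - t * x s $ i" using pos_den[OF traj_box[OF tr, of s], of i] unfolding t_def by auto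
    have "(1 - t) / ((real CARD('n)) * (1 - t * x s $ i)) \<le> (1 - t * x s $ i) / ((real CARD('n)) * (1 - t * x s $ i))"
      using p nn0 by (intro divide_right_mono) auto
    also have "\<dots> = 1 / (real CARD('n))" using p by simp
    finally show ?thesis unfolding xs using p nn0 t1 by simp
  qed
  have nn12: "1/(real CARD('n)) \<le> 1/2" using nn2 by (simp add: divide_le_eq)
  have t0: "0 \<le> t" using ti unfolding t_def by simp
  have suc: "\<bar>x (Suc s) $ i - z\<bar> \<le> (1/2)^(Suc s)" for s
  proof (induction s)
    case 0
    have "\<bar>x (Suc 0) $ i - z\<bar> \<le> 1/(real CARD('n))" using rng[of 0] z0 z1 by (simp add: abs_le_iff)
    thus ?case using nn12 by (simp only: power_Suc power_0 mult_1_right)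
  next
    case (Suc s)
    have "\<bar>x (Suc (Suc s)) $ i - z\<bar> = \<bar>(1 - t) / ((real CARD('n)) * (1 - t * x (Suc s) $ i)) - (1 - t) / ((real CARD('n)) * (1 - t * z))\<bar>"
      using xs[of "Suc s"] zf by simp
    also have "\<dots> \<le> \<bar>x (Suc s) $ i - z\<bar> / 2"
      using g_contr[OF nn2 t0 t1, of "x (Suc s) $ i" z] rng[of s] z0 z1 by simp
    also have "\<dots> \<le> (1/2)^(Suc s) / 2" using Suc.IH by simp
    finally show ?case by simp
  qed
  show ?thesis
  proof (cases s)
    case 0
    have a: "0 \<le> x 0 $ i" "x 0 $ i \<le> 1" using traj_box[OF tr, of 0] by auto
    have "\<bar>x 0 $ i - z\<bar> \<le> 1" unfolding abs_le_iff using a z0 z1 nn12 by linarith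
    thus ?thesis using 0 unfolding z_def t_def by simp
  next
    case (Suc m) thus ?thesis using suc[of m] unfolding z_def t_def by simp
  qed
qed

end

locale setting2 = setting C \<theta> l for C :: "real^'n^'n" and \<theta> :: "real^'n" and l :: 'n +
  assumes hP: "\<forall>j. 0 < \<theta>$j \<and> j \<noteq> l \<longrightarrow> C$l$j = 0"
    and hS: "(\<Sum>j\<in>{j. 0 < \<theta> $ j \<and> j \<noteq> l}. \<theta> $ j) \<le> 4 * (real CARD('n)) / 5 - 1"
begin

lemma thl1: "\<theta>$l < 1" using th by auto

lemma card_split: "(real CARD('n)) = real (card {i. \<theta>$i = 0}) + 1 + real (card {j. 0 < \<theta> $ j \<and> j \<noteq> l})"
proof -
  let ?Z = "{i. \<theta>$i = 0}"
  have U: "(UNIV::'n set) = ?Z \<union> insert l {j. 0 < \<theta> $ j \<and> j \<noteq> l}"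
  proof (rule set_eqI)
    fix i :: 'n
    show "i \<in> UNIV \<longleftrightarrow> i \<in> ?Z \<union> insert l {j. 0 < \<theta> $ j \<and> j \<noteq> l}"
      using th[rule_format, of i] by (cases "i = l") auto
  qed
  have D: "?Z \<inter> insert l {j. 0 < \<theta> $ j \<and> j \<noteq> l} = {}" using thl by auto
  have "CARD('n) = card ?Z + card (insert l {j. 0 < \<theta> $ j \<and> j \<noteq> l})"
    by (subst U, rule card_Un_disjoint) (use D in auto)
  also have "card (insert l {j. 0 < \<theta> $ j \<and> j \<noteq> l}) = Suc (card {j. 0 < \<theta> $ j \<and> j \<noteq> l})" by (rule card_insert_disjoint) auto
  finally show ?thesis by simp
qed

lemma z_props:
  assumes "j \<in> {j. 0 < \<theta> $ j \<and> j \<noteq> l}"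
  shows "0 \<le> limval (real CARD('n)) (\<theta>$j)" "limval (real CARD('n)) (\<theta>$j) \<le> 1/(real CARD('n))"
    "limval (real CARD('n)) (\<theta>$j) = (1 - \<theta>$j) / ((real CARD('n)) * (1 - \<theta>$j * limval (real CARD('n)) (\<theta>$j)))"
    "phi (\<theta>$j) (limval (real CARD('n)) (\<theta>$j)) = 1 - (real CARD('n)) * limval (real CARD('n)) (\<theta>$j)"
proof -
  have t: "0 < \<theta>$j" "\<theta>$j < 1" using assms th by auto
  note LP = limval_props[OF nn2 t, folded limval_def]
  show "0 \<le> limval (real CARD('n)) (\<theta>$j)" "limval (real CARD('n)) (\<theta>$j) \<le> 1/(real CARD('n))"
    "limval (real CARD('n)) (\<theta>$j) = (1 - \<theta>$j) / ((real CARD('n)) * (1 - \<theta>$j * limval (real CARD('n)) (\<theta>$j)))"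
    using LP by auto
  show "phi (\<theta>$j) (limval (real CARD('n)) (\<theta>$j)) = 1 - (real CARD('n)) * limval (real CARD('n)) (\<theta>$j)" unfolding phi_def using LP by auto
qed

lemma xi_eq: "xi_star \<theta> l = 1 + (\<Sum>j\<in>{j. 0 < \<theta> $ j \<and> j \<noteq> l}. phi (\<theta>$j) (limval (real CARD('n)) (\<theta>$j)))"
proof -
  have "(\<Sum>j\<in>{j. 0 < \<theta> $ j \<and> j \<noteq> l}. phi (\<theta>$j) (limval (real CARD('n)) (\<theta>$j))) = (\<Sum>j\<in>{j. 0 < \<theta> $ j \<and> j \<noteq> l}. 1 - (real CARD('n)) * limval (real CARD('n)) (\<theta>$j))"
    by (rule sum.cong[OF refl]) (rule z_props(4))
  also have "\<dots> = real (card {j. 0 < \<theta> $ j \<and> j \<noteq> l}) - (real CARD('n)) * (\<Sum>j\<in>{j. 0 < \<theta> $ j \<and> j \<noteq> l}. limval (real CARD('n)) (\<theta>$j))"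
    by (simp add: sum_subtractf sum_distrib_left)
  finally have e: "(\<Sum>j\<in>{j. 0 < \<theta> $ j \<and> j \<noteq> l}. phi (\<theta>$j) (limval (real CARD('n)) (\<theta>$j))) = real (card {j. 0 < \<theta> $ j \<and> j \<noteq> l}) - (real CARD('n)) * (\<Sum>j\<in>{j. 0 < \<theta> $ j \<and> j \<noteq> l}. limval (real CARD('n)) (\<theta>$j))" .
  show ?thesis unfolding xi_star_def Let_def using e card_split by linarith
qed

lemma xiF_bounds:
  assumes x: "\<forall>i. 0 \<le> x$i \<and> x$i \<le> 1"
  shows "1 \<le> 1 + (\<Sum>j\<in>{j. 0 < \<theta> $ j \<and> j \<noteq> l}. phi (\<theta>$j) (x$j))" "1 + (\<Sum>j\<in>{j. 0 < \<theta> $ j \<and> j \<noteq> l}. phi (\<theta>$j) (x$j)) \<le> 4 * (real CARD('n)) / 5"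
proof -
  have b: "0 \<le> phi (\<theta>$j) (x$j) \<and> phi (\<theta>$j) (x$j) \<le> \<theta>$j" for j
    unfolding phi_def using phi_bounds[of "\<theta>$j" "x$j"] th x by auto
  show "1 \<le> 1 + (\<Sum>j\<in>{j. 0 < \<theta> $ j \<and> j \<noteq> l}. phi (\<theta>$j) (x$j))" using b by (simp add: sum_nonneg)
  have "(\<Sum>j\<in>{j. 0 < \<theta> $ j \<and> j \<noteq> l}. phi (\<theta>$j) (x$j)) \<le> (\<Sum>j\<in>{j. 0 < \<theta> $ j \<and> j \<noteq> l}. \<theta>$j)" using b by (intro sum_mono) auto
  thus "1 + (\<Sum>j\<in>{j. 0 < \<theta> $ j \<and> j \<noteq> l}. phi (\<theta>$j) (x$j)) \<le> 4 * (real CARD('n)) / 5" using hS by simp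
qed

definition zv :: "real^'n" where "zv = (\<chi> j. if j \<in> {j. 0 < \<theta> $ j \<and> j \<noteq> l} then limval (real CARD('n)) (\<theta>$j) else 0)"

lemma zv_box: "\<forall>i. 0 \<le> zv$i \<and> zv$i \<le> 1"
proof
  fix i
  have "1/(real CARD('n)) \<le> 1" using nn2 by (simp add: divide_le_eq)
  show "0 \<le> zv$i \<and> zv$i \<le> 1"
  proof (cases "i \<in> {j. 0 < \<theta> $ j \<and> j \<noteq> l}")
    case True
    have a: "0 \<le> limval (real CARD('n)) (\<theta>$i)" "limval (real CARD('n)) (\<theta>$i) \<le> 1/(real CARD('n))" using z_props[OF True] by auto
    have "zv$i = limval (real CARD('n)) (\<theta>$i)" unfolding zv_def using True by simp
    thus ?thesis using a \<open>1/(real CARD('n)) \<le> 1\<close> by linarith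
  next
    case False
    have "zv$i = 0" unfolding zv_def by (simp only: vec_lambda_beta if_not_P[OF False])
    thus ?thesis by simp
  qed
qed

lemma xi_eq2: "xi_star \<theta> l = 1 + (\<Sum>j\<in>{j. 0 < \<theta> $ j \<and> j \<noteq> l}. phi (\<theta>$j) (zv$j))"
  unfolding xi_eq zv_def by (intro arg_cong[where f="\<lambda>u. 1 + u"] sum.cong) auto

lemma xs_bounds: "1 \<le> xi_star \<theta> l" "xi_star \<theta> l \<le> 4 * (real CARD('n)) / 5"
  unfolding xi_eq2 using xiF_bounds[OF zv_box] by auto

lemma w_props:
  defines "w \<equiv> xstar_l \<theta> l" and "X \<equiv> xi_star \<theta> l" and "t \<equiv> \<theta>$l"
  shows "0 \<le> w" "t * w < 1 - 4 * t / 5" "w = (1 - t) * X / ((real CARD('n)) * (1 - t * w))"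
    "X / (real CARD('n)) - w = t * w * (1 - w) / (1 - t)"
proof -
  have t: "0 < t" "t < 1" unfolding t_def using thl thl1 by auto
  have X1: "1 \<le> X" and X2: "X \<le> 4 * (real CARD('n)) / 5" unfolding X_def using xs_bounds by auto
  have k0: "0 \<le> (1 - t) * X" using t X1 by simp
  have tt: "4 * t * (1 - t) \<le> 1"
  proof -
    have "4 * t * (1 - t) = 1 - (2*t - 1)^2" by (simp add: power2_eq_square algebra_simps)
    thus ?thesis by simp
  qed
  have d: "4 * t * ((1 - t) * X) \<le> (real CARD('n))"
  proof -
    have "4 * t * ((1 - t) * X) = (4 * t * (1 - t)) * X" by simp
    also have "\<dots> \<le> 1 * X" using tt X1 by (intro mult_right_mono) auto
    finally show ?thesis using X2 nn0 by simp
  qed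
  have wd: "w = ((real CARD('n)) - sqrt ((real CARD('n))^2 - 4 * (real CARD('n)) * t * ((1 - t) * X))) / (2 * (real CARD('n)) * t)"
    unfolding w_def xstar_l_def Let_def t_def X_def by (simp add: mult.assoc)
  note Q = quad_root[OF nn0 t(1) k0 d, folded wd]
  show w0: "0 \<le> w" using Q(2) .
  define S where "S = sqrt ((real CARD('n))^2 - 4 * (real CARD('n)) * t * ((1 - t) * X))"
  have D: "0 \<le> (real CARD('n))^2 - 4 * (real CARD('n)) * t * ((1 - t) * X)"
  proof -
    have "4 * (real CARD('n)) * t * ((1 - t) * X) = (real CARD('n)) * (4 * t * ((1 - t) * X))" by simp
    also have "\<dots> \<le> (real CARD('n)) * (real CARD('n))" using d nn0 by (intro mult_left_mono) auto
    finally show ?thesis by (simp add: power2_eq_square)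
  qed
  have S2: "S^2 = (real CARD('n))^2 - 4 * (real CARD('n)) * t * ((1 - t) * X)" unfolding S_def using D by simp
  have S0: "0 \<le> S" unfolding S_def using D by simp
  have wS: "w = ((real CARD('n)) - S) / (2 * (real CARD('n)) * t)" unfolding wd S_def ..
  define m where "m = 8 * (real CARD('n)) * t - 5 * (real CARD('n))"
  have mS: "m < 5 * S"
  proof (cases "m < 0")
    case True thus ?thesis using S0 by simp
  next
    case False
    have X5: "5 * X \<le> 4 * (real CARD('n))" using X2 by simp
    have c1: "(1 - t) * (5 * X) \<le> (1 - t) * (4 * (real CARD('n)))" using X5 t by (intro mult_left_mono) auto
    have c2: "25 * ((1 - t) * X) = 5 * ((1 - t) * (5 * X))" by simp
    have c2': "5 * ((1 - t) * (4 * (real CARD('n)))) = 20 * (real CARD('n)) - 20 * (real CARD('n)) * t" by (simp add: algebra_simps)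
    have c3: "0 < (real CARD('n)) * t" using nn0 t by simp
    have c4: "0 < 20 * (real CARD('n)) - 16 * (real CARD('n)) * t - 25 * ((1 - t) * X)" using c1 c2 c2' c3 by linarith
    have id: "(5 * S)^2 - m^2 = 4 * (real CARD('n)) * t * (20 * (real CARD('n)) - 16 * (real CARD('n)) * t - 25 * ((1 - t) * X))"
    proof -
      have "(5 * S)^2 = 25 * S^2" by (simp add: power2_eq_square)
      also have "\<dots> = 25 * ((real CARD('n))^2 - 4 * (real CARD('n)) * t * ((1 - t) * X))" using S2 by simp
      finally have "(5 * S)^2 - m^2 = 25 * ((real CARD('n))^2 - 4 * (real CARD('n)) * t * ((1 - t) * X)) - (8 * (real CARD('n)) * t - 5 * (real CARD('n)))^2"
        unfolding m_def by simp
      also have "\<dots> = 4 * (real CARD('n)) * t * (20 * (real CARD('n)) - 16 * (real CARD('n)) * t - 25 * ((1 - t) * X))"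
        by (simp add: power2_eq_square algebra_simps)
      finally show ?thesis .
    qed
    have "0 < 4 * (real CARD('n)) * t * (20 * (real CARD('n)) - 16 * (real CARD('n)) * t - 25 * ((1 - t) * X))"
      using c4 nn0 t by (intro mult_pos_pos) auto
    hence "m^2 < (5 * S)^2" using id by linarith
    moreover have "0 \<le> 5 * S" using S0 by simp
    ultimately show ?thesis by (rule power_less_imp_less_base)
  qed
  have "t * w = ((real CARD('n)) - S) / (2 * (real CARD('n)))" unfolding wS using t nn0 by simp
  also have "\<dots> < 1 - 4 * t / 5"
  proof -
    have "5 * ((real CARD('n)) - S) < 2 * (real CARD('n)) * (5 - 4 * t)" using mS unfolding m_def by (simp add: algebra_simps)
    hence "((real CARD('n)) - S) < (2 * (real CARD('n))) * (1 - 4 * t / 5)" by (simp add: algebra_simps)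
    thus ?thesis using nn0 by (simp add: divide_less_eq mult.commute)
  qed
  finally show tw: "t * w < 1 - 4 * t / 5" .
  have pw: "0 < 1 - t * w" using tw t by linarith
  have q: "(real CARD('n)) * t * w^2 - (real CARD('n)) * w + (1 - t) * X = 0" using Q(1) .
  have h: "w * ((real CARD('n)) * (1 - t * w)) = (1 - t) * X" using q by (simp add: power2_eq_square algebra_simps)
  have nz: "(real CARD('n)) * (1 - t * w) \<noteq> 0" using pw nn0 by simp
  show "w = (1 - t) * X / ((real CARD('n)) * (1 - t * w))" by (rule eq_divide_imp[OF nz h])
  have h2: "X * (1 - t) = (real CARD('n)) * (w - t * w^2)" using q by (simp add: algebra_simps)
  have "X / (real CARD('n)) = (w - t * w^2) / (1 - t)" using h2 t nn0 by (simp add: field_simps)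
  hence "X / (real CARD('n)) - w = ((w - t * w^2) - w * (1 - t)) / (1 - t)" using t by (simp add: field_simps)
  also have "(w - t * w^2) - w * (1 - t) = t * w * (1 - w)" by (simp add: power2_eq_square algebra_simps)
  finally show "X / (real CARD('n)) - w = t * w * (1 - w) / (1 - t)" .
qed

lemma xstar_comp: "xstar C \<theta> l $ i = (if i = l then xstar_l \<theta> l else if 0 < \<theta>$i then limval (real CARD('n)) (\<theta>$i)
     else 1 / (real CARD('n)) + (xi_star \<theta> l / (real CARD('n)) - xstar_l \<theta> l) * C$l$i)"
  unfolding xstar_def Let_def by simp

lemma P_bound:
  assumes tr: "trajectory C \<theta> x" and j: "j \<in> {j. 0 < \<theta> $ j \<and> j \<noteq> l}"
  shows "\<bar>x s $ j - zv $ j\<bar> \<le> (1/2)^s"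
proof -
  have jl: "j \<noteq> l" and tj: "0 < \<theta>$j" and cl: "C$l$j = 0" using j hP by auto
  have "zv $ j = limval (real CARD('n)) (\<theta>$j)" unfolding zv_def using j by simp
  thus ?thesis using part_i_bound[OF tr jl tj cl, of s] by simp
qed

lemma xi_diff:
  assumes tr: "trajectory C \<theta> x"
  shows "\<bar>(1 + (\<Sum>j\<in>{j. 0 < \<theta> $ j \<and> j \<noteq> l}. phi (\<theta>$j) (x s $ j))) - xi_star \<theta> l\<bar> \<le> (\<Sum>j\<in>{j. 0 < \<theta> $ j \<and> j \<noteq> l}. \<theta>$j / (1 - \<theta>$j)) * (1/2)^s"
proof -
  have "\<bar>(1 + (\<Sum>j\<in>{j. 0 < \<theta> $ j \<and> j \<noteq> l}. phi (\<theta>$j) (x s $ j))) - xi_star \<theta> l\<bar>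
      = \<bar>\<Sum>j\<in>{j. 0 < \<theta> $ j \<and> j \<noteq> l}. phi (\<theta>$j) (x s $ j) - phi (\<theta>$j) (zv $ j)\<bar>"
    unfolding xi_eq2 by (simp add: sum_subtractf)
  also have "\<dots> \<le> (\<Sum>j\<in>{j. 0 < \<theta> $ j \<and> j \<noteq> l}. \<bar>phi (\<theta>$j) (x s $ j) - phi (\<theta>$j) (zv $ j)\<bar>)" by (rule sum_abs)
  also have "\<dots> \<le> (\<Sum>j\<in>{j. 0 < \<theta> $ j \<and> j \<noteq> l}. \<theta>$j / (1 - \<theta>$j) * (1/2)^s)"
  proof (rule sum_mono)
    fix j assume j: "j \<in> {j. 0 < \<theta> $ j \<and> j \<noteq> l}"
    have t: "0 \<le> \<theta>$j" "\<theta>$j < 1" using th by auto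
    have a: "0 \<le> x s $ j" "x s $ j \<le> 1" using traj_box[OF tr, of s] by auto
    have b: "0 \<le> zv $ j" "zv $ j \<le> 1" using zv_box by auto
    have "\<bar>phi (\<theta>$j) (x s $ j) - phi (\<theta>$j) (zv $ j)\<bar> \<le> \<theta>$j / (1 - \<theta>$j) * \<bar>x s $ j - zv $ j\<bar>"
      unfolding phi_def by (rule phi_lip[OF t a b])
    also have "\<dots> \<le> \<theta>$j / (1 - \<theta>$j) * (1/2)^s"
      using P_bound[OF tr j, of s] t by (intro mult_left_mono) auto
    finally show "\<bar>phi (\<theta>$j) (x s $ j) - phi (\<theta>$j) (zv $ j)\<bar> \<le> \<theta>$j / (1 - \<theta>$j) * (1/2)^s" .
  qed
  also have "\<dots> = (\<Sum>j\<in>{j. 0 < \<theta> $ j \<and> j \<noteq> l}. \<theta>$j / (1 - \<theta>$j)) * (1/2)^s" by (simp add: sum_distrib_right)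
  finally show ?thesis .
qed

lemma L_nonneg: "0 \<le> (\<Sum>j\<in>{j. 0 < \<theta> $ j \<and> j \<noteq> l}. \<theta>$j / (1 - \<theta>$j))"
proof (rule sum_nonneg)
  fix j have "0 \<le> \<theta>$j" "\<theta>$j < 1" using th by auto
  thus "0 \<le> \<theta>$j / (1 - \<theta>$j)" by simp
qed

lemma l_bound:
  assumes tr: "trajectory C \<theta> x"
  shows "\<exists>c r. 0 \<le> c \<and> 0 < r \<and> r < 1 \<and> (\<forall>s. \<bar>x s $ l - xstar_l \<theta> l\<bar> \<le> c * r^s)"
proof -
  define w where "w = xstar_l \<theta> l"
  define X where "X = xi_star \<theta> l"
  define t where "t = \<theta>$l"
  define L where "L = (\<Sum>j\<in>{j. 0 < \<theta> $ j \<and> j \<noteq> l}. \<theta>$j / (1 - \<theta>$j))"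
  define Y where "Y s = 1 + (\<Sum>j\<in>{j. 0 < \<theta> $ j \<and> j \<noteq> l}. phi (\<theta>$j) (x s $ j))" for s
  note W = w_props[folded w_def X_def t_def]
  have t: "0 < t" "t < 1" unfolding t_def using thl thl1 by auto
  have L0: "0 \<le> L" unfolding L_def by (rule L_nonneg)
  have xl: "x (Suc s) $ l = (1 - t) * Y s / ((real CARD('n)) * (1 - t * x s $ l))" for s
    unfolding traj_step[OF tr] Y_def t_def by (rule F_l[OF traj_box[OF tr] hP])
  have Yb: "0 \<le> Y s" "Y s \<le> 4 * (real CARD('n)) / 5" for s
    unfolding Y_def using xiF_bounds[OF traj_box[OF tr, of s]] by auto
  have Yd: "\<bar>Y s - X\<bar> \<le> L * (1/2)^s" for s
    unfolding Y_def X_def L_def by (rule xi_diff[OF tr])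
  have le45: "x (Suc s) $ l \<le> 4/5" for s
  proof -
    have p: "0 < 1 - t * x s $ l" "1 - t \<le> 1 - t * x s $ l"
      using pos_den[OF traj_box[OF tr, of s], of l] unfolding t_def by auto
    have f1: "(1 - t) / (1 - t * x s $ l) \<le> 1" using p by (simp add: divide_le_eq)
    have "x (Suc s) $ l = ((1 - t) / (1 - t * x s $ l)) * (Y s / (real CARD('n)))" unfolding xl by simp
    also have "\<dots> \<le> 1 * (Y s / (real CARD('n)))" using f1 Yb[of s] nn0 by (intro mult_right_mono) auto
    also have "\<dots> \<le> 4/5" using Yb[of s] nn0 by (simp add: divide_le_eq)
    finally show ?thesis .
  qed
  define q where "q = t * w / (1 - 4 * t / 5)"
  have p45: "0 < 1 - 4 * t / 5" using t by simp
  have q0: "0 \<le> q" unfolding q_def using t W(1) p45 by simp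
  have q1: "q < 1" unfolding q_def using W(2) p45 by (simp add: divide_less_eq)
  define f where "f s = \<bar>x (Suc s) $ l - w\<bar>" for s
  have f0: "\<forall>s. 0 \<le> f s" unfolding f_def by simp
  have fstep: "\<forall>s. f (Suc s) \<le> q * f s + (L / (real CARD('n))) * (1/2)^s"
  proof
    fix s
    have a: "0 \<le> x (Suc s) $ l" "x (Suc s) $ l \<le> 4/5" using traj_box[OF tr, of "Suc s"] le45[of s] by auto
    have "f (Suc s) \<le> q * f s + \<bar>Y (Suc s) - X\<bar> / (real CARD('n))"
      unfolding f_def q_def xl[of "Suc s"] by (rule l_step[OF nn0 t a W(2) W(1) W(3)])
    also have "\<bar>Y (Suc s) - X\<bar> / (real CARD('n)) \<le> (L * (1/2)^(Suc s)) / (real CARD('n))"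
      by (rule divide_right_mono[OF Yd[of "Suc s"]]) (use nn0 in simp)
    also have "(L * (1/2)^(Suc s)) / (real CARD('n)) \<le> (L / (real CARD('n))) * (1/2)^s"
    proof -
      have e: "(L * (1/2)^(Suc s)) / (real CARD('n)) = ((L / (real CARD('n))) * (1/2)^s) * (1/2)" by simp
      have "0 \<le> (L / (real CARD('n))) * (1/2)^s" using L0 nn0 by simp
      moreover have "\<And>Z::real. 0 \<le> Z \<Longrightarrow> Z * (1/2) \<le> Z" by simp
      ultimately show ?thesis unfolding e by blast
    qed
    finally show "f (Suc s) \<le> q * f s + (L / (real CARD('n))) * (1/2)^s" by simp
  qed
  have K0: "0 \<le> L / (real CARD('n))" using L0 nn0 by simp
  obtain A r where Ar: "0 \<le> A" "0 < r" "r < 1" "\<forall>s. f s \<le> A * r^s"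
    using rec_bound[OF f0 q0 q1 K0 fstep] by blast
  have "\<forall>s. \<bar>x s $ l - w\<bar> \<le> max (\<bar>x 0 $ l - w\<bar>) (A / r) * r^s"
    by (rule shift_bound[where e="\<lambda>s. \<bar>x s $ l - w\<bar>", simplified, OF _ Ar(2,3,1)]) (use Ar(4) f_def in auto)
  moreover have "0 \<le> max (\<bar>x 0 $ l - w\<bar>) (A / r)" by simp
  ultimately show ?thesis unfolding w_def using Ar(2,3) by (intro exI conjI) (auto simp: less_imp_le)
qed

lemma f_bound:
  assumes tr: "trajectory C \<theta> x" and ti: "\<theta>$i = 0"
  shows "\<exists>c r. 0 \<le> c \<and> 0 \<le> r \<and> r < 1 \<and> (\<forall>s. \<bar>x s $ i - xstar C \<theta> l $ i\<bar> \<le> c * r^s)"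
proof -
  define w where "w = xstar_l \<theta> l"
  define X where "X = xi_star \<theta> l"
  define t where "t = \<theta>$l"
  note W = w_props[folded w_def X_def t_def]
  have t: "0 < t" "t < 1" unfolding t_def using thl thl1 by auto
  have il: "i \<noteq> l" using ti thl by auto
  obtain c r where cr: "0 \<le> c" "0 < r" "r < 1" "\<forall>s. \<bar>x s $ l - w\<bar> \<le> c * r^s"
    using l_bound[OF tr] unfolding w_def by blast
  define \<kappa> where "\<kappa> = C$l$i * t / (1 - t)"
  have k0: "0 \<le> \<kappa>" unfolding \<kappa>_def using C_nonneg[of l i] t by simp
  have nz: "1 - t \<noteq> 0" using t by simp
  define v where "v = xstar C \<theta> l $ i"
  have v: "v = 1/(real CARD('n)) + \<kappa> * ((1 - w) * w)"
  proof -
    have "v = 1/(real CARD('n)) + (X / (real CARD('n)) - w) * C$l$i" unfolding v_def xstar_comp X_def w_def using il ti by simp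
    also have "(X / (real CARD('n)) - w) * C$l$i = \<kappa> * ((1 - w) * w)" unfolding W(4) \<kappa>_def using nz by (simp add: field_simps)
    finally show ?thesis .
  qed
  have xi: "x (Suc s) $ i = 1/(real CARD('n)) + \<kappa> * ((1 - x s $ l) * x (Suc s) $ l)" for s
  proof -
    have "x (Suc s) $ i = 1/(real CARD('n)) + (1 - x s $ l) * C$l$i * t * (x (Suc s) $ l) / (1 - t)"
      unfolding traj_step[OF tr] t_def by (rule F_f[OF traj_box[OF tr] ti])
    also have "(1 - x s $ l) * C$l$i * t * (x (Suc s) $ l) / (1 - t) = \<kappa> * ((1 - x s $ l) * x (Suc s) $ l)"
      unfolding \<kappa>_def using nz by (simp add: field_simps)
    finally show ?thesis .
  qed
  have step: "\<forall>s. \<bar>x (Suc s) $ i - v\<bar> \<le> (\<kappa> * (1 + w) * c) * r^s"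
  proof
    fix s
    define a where "a = x s $ l"
    define b where "b = x (Suc s) $ l"
    have a01: "0 \<le> a" "a \<le> 1" unfolding a_def using traj_box[OF tr, of s] by auto
    have ea: "\<bar>a - w\<bar> \<le> c * r^s" unfolding a_def using cr(4) by blast
    have eb: "\<bar>b - w\<bar> \<le> c * r^s"
    proof -
      have "\<bar>b - w\<bar> \<le> c * r^(Suc s)" unfolding b_def using cr(4) by blast
      also have "\<dots> \<le> c * r^s" using cr by (intro mult_left_mono power_decreasing) auto
      finally show ?thesis .
    qed
    have e: "x (Suc s) $ i - v = \<kappa> * ((1 - a) * (b - w) + w * (w - a))"
      unfolding xi v a_def b_def by (simp add: algebra_simps)
    have b1: "\<bar>(1 - a) * (b - w)\<bar> \<le> \<bar>b - w\<bar>"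
    proof -
      have "\<bar>(1 - a) * (b - w)\<bar> = (1 - a) * \<bar>b - w\<bar>" using a01 by (simp add: abs_mult)
      also have "\<dots> \<le> 1 * \<bar>b - w\<bar>" using a01 by (intro mult_right_mono) auto
      finally show ?thesis by simp
    qed
    have b2: "\<bar>w * (w - a)\<bar> = w * \<bar>a - w\<bar>" using W(1) by (simp add: abs_mult abs_minus_commute)
    have b3: "w * \<bar>a - w\<bar> \<le> w * (c * r^s)" using W(1) ea by (intro mult_left_mono) auto
    have "\<bar>(1 - a) * (b - w) + w * (w - a)\<bar> \<le> \<bar>(1 - a) * (b - w)\<bar> + \<bar>w * (w - a)\<bar>" by (rule abs_triangle_ineq)
    hence s1: "\<bar>(1 - a) * (b - w) + w * (w - a)\<bar> \<le> (1 + w) * (c * r^s)"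
      using b1 b2 b3 eb by (simp add: algebra_simps)
    have "\<bar>x (Suc s) $ i - v\<bar> = \<kappa> * \<bar>(1 - a) * (b - w) + w * (w - a)\<bar>"
      unfolding e using k0 by (simp add: abs_mult)
    also have "\<dots> \<le> \<kappa> * ((1 + w) * (c * r^s))" using s1 k0 by (intro mult_left_mono) auto
    finally show "\<bar>x (Suc s) $ i - v\<bar> \<le> (\<kappa> * (1 + w) * c) * r^s" by (simp add: mult_ac)
  qed
  have A0: "0 \<le> \<kappa> * (1 + w) * c" using k0 W(1) cr(1) by simp
  have "\<forall>s. \<bar>x s $ i - v\<bar> \<le> max (\<bar>x 0 $ i - v\<bar>) ((\<kappa> * (1 + w) * c) / r) * r^s"
    by (rule shift_bound[where e="\<lambda>s. \<bar>x s $ i - v\<bar>", simplified, OF step cr(2,3) A0])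
  moreover have "0 \<le> max (\<bar>x 0 $ i - v\<bar>) ((\<kappa> * (1 + w) * c) / r)" by simp
  ultimately show ?thesis unfolding v_def using cr(2,3) by (intro exI conjI) (auto simp: less_imp_le)
qed

lemma comp_bound:
  assumes tr: "trajectory C \<theta> x"
  shows "\<exists>c r. 0 \<le> c \<and> 0 \<le> r \<and> r < 1 \<and> (\<forall>s. \<bar>x s $ i - xstar C \<theta> l $ i\<bar> \<le> c * r^s)"
proof (cases "i = l")
  case True
  obtain c r where cr: "0 \<le> c" "0 < r" "r < 1" "\<forall>s. \<bar>x s $ l - xstar_l \<theta> l\<bar> \<le> c * r^s"
    using l_bound[OF tr] by blast
  have "xstar C \<theta> l $ i = xstar_l \<theta> l" unfolding xstar_comp using True by simp
  thus ?thesis using cr True by (intro exI[of _ c] exI[of _ r]) auto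
next
  case False
  show ?thesis
  proof (cases "0 < \<theta>$i")
    case True
    hence j: "i \<in> {j. 0 < \<theta> $ j \<and> j \<noteq> l}" using False by simp
    have "xstar C \<theta> l $ i = zv $ i" unfolding xstar_comp zv_def using True False by simp
    hence "\<forall>s. \<bar>x s $ i - xstar C \<theta> l $ i\<bar> \<le> 1 * (1/2)^s" using P_bound[OF tr j] by simp
    thus ?thesis by (intro exI[of _ "1::real"] exI[of _ "1/2::real"]) auto
  next
    case False
    hence "\<theta>$i = 0" using th[rule_format, of i] by simp
    thus ?thesis by (rule f_bound[OF tr])
  qed
qed

lemma traj_exp:
  assumes tr: "trajectory C \<theta> x"
  shows "exp_conv x (xstar C \<theta> l)"
proof -
  obtain c r where cr: "0 \<le> c" "0 \<le> r" "r < 1" "\<forall>s. (\<Sum>i\<in>UNIV. \<bar>x s $ i - xstar C \<theta> l $ i\<bar>) \<le> c * r^s"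
    using sum_bound[of "\<lambda>i s. x s $ i - xstar C \<theta> l $ i"] comp_bound[OF tr] by blast
  have "norm (x s - xstar C \<theta> l) \<le> c * r^s" for s
  proof -
    have "norm (x s - xstar C \<theta> l) \<le> (\<Sum>i\<in>UNIV. \<bar>(x s - xstar C \<theta> l) $ i\<bar>)" by (rule norm_le_l1_cart)
    also have "\<dots> = (\<Sum>i\<in>UNIV. \<bar>x s $ i - xstar C \<theta> l $ i\<bar>)" by simp
    also have "\<dots> \<le> c * r^s" using cr(4) by blast
    finally show ?thesis .
  qed
  thus ?thesis unfolding exp_conv_def using cr by blast
qed

lemma exp_conv_tendsto:
  fixes f :: "nat \<Rightarrow> 'a::real_normed_vector"
  assumes "exp_conv f a" shows "f \<longlonglongrightarrow> a"
proof -
  obtain c q where cq: "0 \<le> c" "0 \<le> q" "q < 1" "\<forall>s. norm (f s - a) \<le> c * q ^ s"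
    using assms unfolding exp_conv_def by blast
  have g: "(\<lambda>s. c * q ^ s) \<longlonglongrightarrow> 0"
    using cq by (intro tendsto_mult_right_zero LIMSEQ_power_zero) simp
  have "(\<lambda>s. f s - a) \<longlonglongrightarrow> 0"
    by (rule Lim_null_comparison[OF _ g]) (use cq(4) in simp)
  thus ?thesis by (rule LIM_zero_cancel)
qed

lemma traj_const: assumes "y \<in> prob_simplex" "Fmap C \<theta> y = y" shows "trajectory C \<theta> (\<lambda>s. y)"
  using assms unfolding trajectory_def by simp

lemma xstar_simplex: "xstar C \<theta> l \<in> prob_simplex"
proof -
  define x0 :: "real^'n" where "x0 = (\<chi> i. if i = l then 1 else 0)"
  have x0s: "x0 \<in> prob_simplex" unfolding prob_simplex_def x0_def by simp
  define xs where "xs s = (Fmap C \<theta> ^^ s) x0" for s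
  have tr: "trajectory C \<theta> xs" unfolding trajectory_def xs_def using x0s by simp
  have lim: "xs \<longlonglongrightarrow> xstar C \<theta> l" by (rule exp_conv_tendsto[OF traj_exp[OF tr]])
  have nonneg: "0 \<le> xstar C \<theta> l $ i" for i
  proof (rule LIMSEQ_le_const[OF tendsto_vec_nth[OF lim]])
    show "\<exists>N. \<forall>n\<ge>N. 0 \<le> xs n $ i" using traj_box[OF tr] by blast
  qed
  have "(\<lambda>s. \<Sum>i\<in>UNIV. xs s $ i) \<longlonglongrightarrow> (\<Sum>i\<in>UNIV. xstar C \<theta> l $ i)"
    by (intro tendsto_sum tendsto_vec_nth[OF lim])
  moreover have "(\<lambda>s. \<Sum>i\<in>UNIV. xs s $ i) = (\<lambda>s. 1)"
    using traj_simplex[OF tr] unfolding prob_simplex_def by auto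
  ultimately have "(\<lambda>s. 1::real) \<longlonglongrightarrow> (\<Sum>i\<in>UNIV. xstar C \<theta> l $ i)" by simp
  hence "(\<Sum>i\<in>UNIV. xstar C \<theta> l $ i) = 1" using tendsto_const LIMSEQ_unique by metis
  thus ?thesis unfolding prob_simplex_def using nonneg by simp
qed

lemma xstar_fixed: "Fmap C \<theta> (xstar C \<theta> l) = xstar C \<theta> l"
proof -
  let ?x = "xstar C \<theta> l"
  define w where "w = xstar_l \<theta> l"
  define X where "X = xi_star \<theta> l"
  define t where "t = \<theta>$l"
  note W = w_props[folded w_def X_def t_def]
  have t: "0 < t" "t < 1" unfolding t_def using thl thl1 by auto
  have bx: "\<forall>i. 0 \<le> ?x$i \<and> ?x$i \<le> 1" by (rule simplex_box[OF xstar_simplex])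
  have xl: "?x $ l = w" unfolding xstar_comp w_def by simp
  have Fl: "Fmap C \<theta> ?x $ l = w"
  proof -
    have "(\<Sum>j\<in>{j. 0 < \<theta> $ j \<and> j \<noteq> l}. phi (\<theta>$j) (?x$j)) = (\<Sum>j\<in>{j. 0 < \<theta> $ j \<and> j \<noteq> l}. phi (\<theta>$j) (zv$j))"
      by (rule sum.cong[OF refl]) (auto simp: xstar_comp zv_def)
    hence "1 + (\<Sum>j\<in>{j. 0 < \<theta> $ j \<and> j \<noteq> l}. phi (\<theta>$j) (?x$j)) = X" unfolding X_def xi_eq2 by simp
    hence "Fmap C \<theta> ?x $ l = (1 - t) * X / ((real CARD('n)) * (1 - t * w))"
      unfolding F_l[OF bx hP] xl t_def by simp
    thus ?thesis using W(3) by simp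
  qed
  show ?thesis
  proof (rule vec_eq_iff[THEN iffD2], rule allI)
    fix i
    show "Fmap C \<theta> ?x $ i = ?x $ i"
    proof (cases "i = l")
      case True thus ?thesis using Fl xl by simp
    next
      case il: False
      show ?thesis
      proof (cases "0 < \<theta>$i")
        case True
        have j: "i \<in> {j. 0 < \<theta> $ j \<and> j \<noteq> l}" using True il by simp
        have cl: "C$l$i = 0" using hP True il by auto
        have xi: "?x$i = limval (real CARD('n)) (\<theta>$i)" unfolding xstar_comp using True il by simp
        show ?thesis unfolding F_P[OF bx il cl] xi using z_props(3)[OF j] by simp
      next
        case False
        hence ti: "\<theta>$i = 0" using th[rule_format, of i] by simp
        have xi: "?x$i = 1/(real CARD('n)) + (X/(real CARD('n)) - w) * C$l$i" unfolding xstar_comp X_def w_def using ti il by simp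
        have nz: "1 - t \<noteq> 0" using t by simp
        have "Fmap C \<theta> ?x $ i = 1/(real CARD('n)) + (1 - w) * C$l$i * t * w / (1 - t)"
          unfolding F_f[OF bx ti] xl Fl t_def ..
        also have "\<dots> = ?x$i" unfolding xi W(4) using nz by (simp add: field_simps)
        finally show ?thesis .
      qed
    qed
  qed
qed

lemma unique_fixed:
  assumes "y \<in> prob_simplex" "Fmap C \<theta> y = y" shows "y = xstar C \<theta> l"
proof -
  have "(\<lambda>s. y) \<longlonglongrightarrow> xstar C \<theta> l" by (rule exp_conv_tendsto[OF traj_exp[OF traj_const[OF assms]]])
  moreover have "(\<lambda>s. y) \<longlonglongrightarrow> y" by (rule tendsto_const)
  ultimately show ?thesis using LIMSEQ_unique by blast
qed

end

theorem theorem5: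
  fixes C :: "real^'n^'n" and \<theta> :: "real^'n" and l :: 'n
  assumes n2: "CARD('n) \<ge> 2"
    and C: "admissible_C C"
    and th_nonneg: "\<forall>i. 0 \<le> \<theta> $ i"
    and th_lt1: "\<forall>i. \<theta> $ i < 1"
    and th_some: "\<exists>j. 0 < \<theta> $ j"
    and star: "star_topology C l"
    and thl: "0 < \<theta> $ l" "\<theta> $ l < 1"
  shows "(\<forall>i. 0 < \<theta> $ i \<and> i \<noteq> l \<and> C $ l $ i = 0 \<longrightarrow>
            (\<forall>x. trajectory C \<theta> x \<longrightarrow>
               exp_conv (\<lambda>s. x s $ i) (limval (real CARD('n)) (\<theta> $ i))))
       \<and> ((\<forall>i. 0 < \<theta> $ i \<and> i \<noteq> l \<longrightarrow> C $ l $ i = 0)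
           \<and> (\<Sum>j\<in>{j. 0 < \<theta> $ j \<and> j \<noteq> l}. \<theta> $ j) \<le> 4 * real CARD('n) / 5 - 1
          \<longrightarrow> xstar C \<theta> l \<in> prob_simplex
            \<and> Fmap C \<theta> (xstar C \<theta> l) = xstar C \<theta> l
            \<and> (\<forall>y\<in>prob_simplex. Fmap C \<theta> y = y \<longrightarrow> y = xstar C \<theta> l)
            \<and> (\<forall>x. trajectory C \<theta> x \<longrightarrow> exp_conv x (xstar C \<theta> l)))"
proof -
  have S1: "setting C \<theta> l"
    unfolding setting_def using n2 C th_nonneg th_lt1 star thl by blast
  have P1: "\<forall>i. 0 < \<theta> $ i \<and> i \<noteq> l \<and> C $ l $ i = 0 \<longrightarrow>
            (\<forall>x. trajectory C \<theta> x \<longrightarrow>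
               exp_conv (\<lambda>s. x s $ i) (limval (real CARD('n)) (\<theta> $ i)))"
  proof (intro allI impI)
    fix i x assume h: "0 < \<theta> $ i \<and> i \<noteq> l \<and> C $ l $ i = 0" and tr: "trajectory C \<theta> x"
    have "\<forall>s. norm (x s $ i - limval (real CARD('n)) (\<theta> $ i)) \<le> 1 * (1/2) ^ s"
      using setting.part_i_bound[OF S1 tr] h by simp
    thus "exp_conv (\<lambda>s. x s $ i) (limval (real CARD('n)) (\<theta> $ i))"
      unfolding exp_conv_def by (intro exI[of _ "1::real"] exI[of _ "1/2::real"]) simp
  qed
  have P2: "(\<forall>i. 0 < \<theta> $ i \<and> i \<noteq> l \<longrightarrow> C $ l $ i = 0)
           \<and> (\<Sum>j\<in>{j. 0 < \<theta> $ j \<and> j \<noteq> l}. \<theta> $ j) \<le> 4 * real CARD('n) / 5 - 1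
          \<longrightarrow> xstar C \<theta> l \<in> prob_simplex
            \<and> Fmap C \<theta> (xstar C \<theta> l) = xstar C \<theta> l
            \<and> (\<forall>y\<in>prob_simplex. Fmap C \<theta> y = y \<longrightarrow> y = xstar C \<theta> l)
            \<and> (\<forall>x. trajectory C \<theta> x \<longrightarrow> exp_conv x (xstar C \<theta> l))"
  proof (intro impI)
    assume h: "(\<forall>i. 0 < \<theta> $ i \<and> i \<noteq> l \<longrightarrow> C $ l $ i = 0)
           \<and> (\<Sum>j\<in>{j. 0 < \<theta> $ j \<and> j \<noteq> l}. \<theta> $ j) \<le> 4 * real CARD('n) / 5 - 1"
    have S2: "setting2 C \<theta> l"
      unfolding setting2_def setting2_axioms_def using S1 h by blast
    show "xstar C \<theta> l \<in> prob_simplex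
            \<and> Fmap C \<theta> (xstar C \<theta> l) = xstar C \<theta> l
            \<and> (\<forall>y\<in>prob_simplex. Fmap C \<theta> y = y \<longrightarrow> y = xstar C \<theta> l)
            \<and> (\<forall>x. trajectory C \<theta> x \<longrightarrow> exp_conv x (xstar C \<theta> l))"
      using setting2.xstar_simplex[OF S2] setting2.xstar_fixed[OF S2]
        setting2.unique_fixed[OF S2] setting2.traj_exp[OF S2] by blast
  qed
  show ?thesis using P1 P2 by (rule conjI)
qed

end
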